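(* Let $c\ge0$. Let $w^*$ be an optimal solution of the spectral width problem $$\min_{w,\lambda_n,\lambda_2,\mu}\ \lambda_n-\lambda_2\quad\text{s.t.}\quad L(w)-\lambda_nI\preceq0,\ \ L(w)+\mu\boldsymbol e\boldsymbol e^T-\lambda_2I\succeq0,\ \ \sum_{\{i,j\}\in E_3}w_{ij}=c,\ \ w_{ij}\ge0,$$ where $L(w)=\sum_{\{i,j\}\in E_3}w_{ij}L_{ij}+L_0$, and let $(\xi,u_1,\dots,u_n,v_1,\dots,v_n)$ be an optimal solution of the embedding problem $$\max\ c\xi-\sum_{\{i,j\}\in E_1\cup E_2}\|u_i-u_j\|^2+\sum_{\{i,j\}\in E_1\cup E_2}\|v_i-v_j\|^2$$ subject to $\sum_{i\in V}\|u_i\|^2=1$, $\sum_{i\in V}\|v_i\|^2=1$, $\sum_{i\in V}u_i=0$, $\|u_i-u_j\|^2-\|v_i-v_j\|^2+\xi\le0$ for all $\{i,j\}\in E_3$, with $\xi\in\mathbb{R}$, $u_i,v_i\in\mathbb{R}^n$. Then for every $p\in\mathbb{R}^n$, the vector $(p^Tu_1,\dots,p^Tu_n)^T$ lies in the eigenspace of $L(w^* )$ for its second smallest eigenvalue $\lambda_2(L(w^* ))$, and the vector $(p^Tv_1,\dots,p^Tv_n)^T$ lies in the eigenspace of $L(w^* )$ for its largest eigenvalue $\lambda_n(L(w^* ))$.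
   Context: A multiplex network consists of two layers $G_1=(V_1,E_1)$ and $G_2=(V_2,E_2)$, simple undirected graphs with $|V_1|=|V_2|=N$; vertices of $G_1$ are numbered $1,\dots,N$, those of $G_2$ are numbered $N+1,\dots,2N$, $n=2N$, $V=V_1\cup V_2$; the multiplex is assumed connected. The interlayer edges form the perfect matching $E_3=\{\{i,N+i\}:i=1,\dots,N\}$ with nonnegative weights $w_{ij}$. $L_{ij}=(\delta_i-\delta_j)(\delta_i-\delta_j)^T$, $\delta_i$ the $i$-th standard basis vector of $\mathbb{R}^n$; $L_0=\sum_{\{i,j\}\in E_1\cup E_2}L_{ij}$; $\boldsymbol e$ is the all-ones vector in $\mathbb{R}^n$. *)

theory Defs
  imports "Jordan_Normal_Form.Char_Poly" "HOL-Library.Multiset"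
begin

(* Vertices are 0..<n (paper: 1..n, shifted by one); layer 1 = {0..<N}, layer 2 = {N..<2N}.
   Undirected edges {i,j} are represented as ordered pairs (i,j) with i < j. *)

definition E3 :: "nat \<Rightarrow> (nat \<times> nat) set" where
  "E3 N = {(i, N + i) | i. i < N}"

definition Lij :: "nat \<Rightarrow> nat \<Rightarrow> nat \<Rightarrow> real mat" where
  "Lij n i j = (let d = unit_vec n i - unit_vec n j in mat n n (\<lambda>(k,l). d $ k * d $ l))"

definition L0 :: "nat \<Rightarrow> (nat \<times> nat) set \<Rightarrow> real mat" where
  "L0 n E = mat n n (\<lambda>(k,l). \<Sum>(i,j)\<in>E. Lij n i j $$ (k,l))"

(* L(w) = sum over {i,N+i} in E3 of w_i L_{i,N+i} + L_0;  w i is the weight of edge {i, N+i} *)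
definition Lw :: "nat \<Rightarrow> (nat \<times> nat) set \<Rightarrow> (nat \<Rightarrow> real) \<Rightarrow> real mat" where
  "Lw N E w = mat (2*N) (2*N) (\<lambda>(k,l). (\<Sum>i<N. w i * Lij (2*N) i (N+i) $$ (k,l)) + L0 (2*N) E $$ (k,l))"

definition psd :: "real mat \<Rightarrow> bool" where
  "psd A \<longleftrightarrow> (\<forall>x\<in>carrier_vec (dim_row A). 0 \<le> x \<bullet> (A *\<^sub>v x))"

definition nsd :: "real mat \<Rightarrow> bool" where
  "nsd A \<longleftrightarrow> (\<forall>x\<in>carrier_vec (dim_row A). x \<bullet> (A *\<^sub>v x) \<le> 0)"

definition ones_mat :: "nat \<Rightarrow> real mat" where
  "ones_mat n = mat n n (\<lambda>_. 1)"

definition sw_feasible :: "nat \<Rightarrow> (nat \<times> nat) set \<Rightarrow> real \<Rightarrow> (nat \<Rightarrow> real) \<Rightarrow> real \<Rightarrow> real \<Rightarrow> real \<Rightarrow> bool" where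
  "sw_feasible N E c w lmax l2 mu \<longleftrightarrow>
     nsd (Lw N E w - lmax \<cdot>\<^sub>m 1\<^sub>m (2*N)) \<and>
     psd (Lw N E w + mu \<cdot>\<^sub>m ones_mat (2*N) - l2 \<cdot>\<^sub>m 1\<^sub>m (2*N)) \<and>
     (\<Sum>i<N. w i) = c \<and> (\<forall>i<N. 0 \<le> w i)"

definition sw_optimal :: "nat \<Rightarrow> (nat \<times> nat) set \<Rightarrow> real \<Rightarrow> (nat \<Rightarrow> real) \<Rightarrow> bool" where
  "sw_optimal N E c w \<longleftrightarrow>
     (\<exists>lmax l2 mu. sw_feasible N E c w lmax l2 mu \<and>
        (\<forall>w' lmax' l2' mu'. sw_feasible N E c w' lmax' l2' mu' \<longrightarrow> lmax - l2 \<le> lmax' - l2'))"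

definition sqn :: "real vec \<Rightarrow> real" where
  "sqn x = x \<bullet> x"

definition emb_feasible :: "nat \<Rightarrow> real \<Rightarrow> (nat \<Rightarrow> real vec) \<Rightarrow> (nat \<Rightarrow> real vec) \<Rightarrow> bool" where
  "emb_feasible N xi u v \<longleftrightarrow>
     (\<forall>i<2*N. u i \<in> carrier_vec (2*N) \<and> v i \<in> carrier_vec (2*N)) \<and>
     (\<Sum>i<2*N. sqn (u i)) = 1 \<and> (\<Sum>i<2*N. sqn (v i)) = 1 \<and>
     (\<forall>k<2*N. (\<Sum>i<2*N. u i $ k) = 0) \<and>
     (\<forall>(i,j)\<in>E3 N. sqn (u i - u j) - sqn (v i - v j) + xi \<le> 0)"

definition emb_obj :: "nat \<Rightarrow> (nat \<times> nat) set \<Rightarrow> real \<Rightarrow> real \<Rightarrow> (nat \<Rightarrow> real vec) \<Rightarrow> (nat \<Rightarrow> real vec) \<Rightarrow> real" where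
  "emb_obj N E c xi u v = c * xi - (\<Sum>(i,j)\<in>E. sqn (u i - u j)) + (\<Sum>(i,j)\<in>E. sqn (v i - v j))"

definition emb_optimal :: "nat \<Rightarrow> (nat \<times> nat) set \<Rightarrow> real \<Rightarrow> real \<Rightarrow> (nat \<Rightarrow> real vec) \<Rightarrow> (nat \<Rightarrow> real vec) \<Rightarrow> bool" where
  "emb_optimal N E c xi u v \<longleftrightarrow> emb_feasible N xi u v \<and>
     (\<forall>xi' u' v'. emb_feasible N xi' u' v' \<longrightarrow> emb_obj N E c xi' u' v' \<le> emb_obj N E c xi u v)"

definition sorted_eigs :: "real mat \<Rightarrow> real list" where
  "sorted_eigs A = sorted_list_of_multiset (proots (char_poly A))"

definition lambda2 :: "real mat \<Rightarrow> real" where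
  "lambda2 A = sorted_eigs A ! 1"

definition lambda_max :: "real mat \<Rightarrow> real" where
  "lambda_max A = sorted_eigs A ! (dim_row A - 1)"

definition eigenspace :: "real mat \<Rightarrow> real \<Rightarrow> real vec set" where
  "eigenspace A l = {x \<in> carrier_vec (dim_row A). A *\<^sub>v x = l \<cdot>\<^sub>v x}"

definition connected_on :: "nat \<Rightarrow> (nat \<times> nat) set \<Rightarrow> bool" where
  "connected_on n E \<longleftrightarrow> (\<forall>i<n. \<forall>j<n. (i, j) \<in> (E \<union> E\<inverse>)\<^sup>*)"

end

theory Submission
  imports Defs
begin

lemma sym_real_eigen:
  fixes A :: "real mat"
  assumes A: "A \<in> carrier_mat n n" and sym: "A\<^sup>T = A" and n: "0 < n"
  shows "\<exists>e v. v \<in> carrier_vec n \<and> v \<noteq> 0\<^sub>v n \<and> A *\<^sub>v v = e \<cdot>\<^sub>v v"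
proof -
  define Ac where "Ac = map_mat complex_of_real A"
  have Ac: "Ac \<in> carrier_mat n n" using A by (simp add: Ac_def)
  have cp: "char_poly Ac = map_poly of_real (char_poly A)"
    unfolding Ac_def by (rule of_real_hom.char_poly_hom[OF A])
  have "degree (char_poly Ac) = n" using degree_monic_char_poly[OF Ac] by simp
  hence "\<not> constant (poly (char_poly Ac))" using n by (simp add: constant_degree)
  then obtain z where z: "poly (char_poly Ac) z = 0" using fundamental_theorem_of_algebra by blast
  hence "eigenvalue Ac z" using eigenvalue_root_char_poly[OF Ac] by simp
  then obtain x where x: "x \<in> carrier_vec n" "x \<noteq> 0\<^sub>v n" "Ac *\<^sub>v x = z \<cdot>\<^sub>v x"
    unfolding eigenvalue_def eigenvector_def using Ac by auto
  define s where "s = (\<Sum>j<n. cnj (x$j) * (Ac *\<^sub>v x)$j)"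
  have Acx: "(Ac *\<^sub>v x)$j = (\<Sum>k<n. of_real (A$$(j,k)) * x$k)" if "j < n" for j
    using that Ac A x(1) by (auto simp: Ac_def scalar_prod_def row_def lessThan_atLeast0)
  define r where "r = (\<Sum>j<n. cnj (x$j) * x$j)"
  have s1: "s = z * r" unfolding s_def r_def using x(3) x(1)
    by (auto simp: sum_distrib_left algebra_simps intro!: sum.cong)
  have symA: "A$$(j,k) = A$$(k,j)" if "j<n" "k<n" for j k
    using sym A that by (metis carrier_matD index_transpose_mat(1))
  have "cnj s = (\<Sum>j<n. x$j * (\<Sum>k<n. of_real (A$$(j,k)) * cnj (x$k)))"
    unfolding s_def by (simp add: Acx)
  also have "\<dots> = (\<Sum>j<n. \<Sum>k<n. x$j * of_real (A$$(j,k)) * cnj (x$k))"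
    by (simp add: sum_distrib_left mult.assoc)
  also have "\<dots> = (\<Sum>k<n. \<Sum>j<n. x$j * of_real (A$$(j,k)) * cnj (x$k))"
    by (rule sum.swap)
  also have "\<dots> = (\<Sum>k<n. cnj (x$k) * (\<Sum>j<n. of_real (A$$(k,j)) * x$j))"
    by (simp add: sum_distrib_left symA algebra_simps)
  also have "\<dots> = s" unfolding s_def by (simp add: Acx)
  finally have "cnj s = s" .
  hence ims: "Im s = 0" by (metis cnj.simps(2) complex.expand neg_equal_zero)
  have rr: "r = of_real (\<Sum>j<n. (cmod (x$j))^2)"
    unfolding r_def of_real_sum by (intro sum.cong refl) (metis complex_norm_square mult.commute)
  have "\<exists>j<n. x$j \<noteq> 0" using x(1,2) by (metis carrier_vecD eq_vecI index_zero_vec(1) index_zero_vec(2))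
  then obtain j where j: "j<n" "x$j \<noteq> 0" by blast
  have "(\<Sum>j<n. (cmod (x$j))^2) \<ge> (cmod (x$j))^2"
    by (rule member_le_sum) (use j in auto)
  moreover have "(cmod (x$j))^2 > 0" using j by simp
  ultimately have rpos: "(\<Sum>j<n. (cmod (x$j))^2) > 0" by linarith
  have "Im s = Im z * (\<Sum>j<n. (cmod (x$j))^2)" unfolding s1 rr by simp
  hence "Im z = 0" using ims rpos by simp
  hence zr: "z = of_real (Re z)" by (simp add: complex_eq_iff)
  have "of_real (poly (char_poly A) (Re z)) = (0::complex)"
    using z unfolding cp of_real_hom.poly_map_poly[symmetric] by (metis zr)
  hence "poly (char_poly A) (Re z) = 0" by simp
  hence "eigenvalue A (Re z)" using eigenvalue_root_char_poly[OF A] by simp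
  then show ?thesis unfolding eigenvalue_def eigenvector_def using A by auto
qed

lemma mat_eq_by_vec:
  fixes A B :: "'a::comm_ring_1 mat"
  assumes A: "A \<in> carrier_mat n m" and B: "B \<in> carrier_mat n m"
    and h: "\<And>x. x \<in> carrier_vec m \<Longrightarrow> A *\<^sub>v x = B *\<^sub>v x"
  shows "A = B"
proof (rule eq_matI)
  fix i j assume ij: "i < dim_row B" "j < dim_col B"
  have "A *\<^sub>v unit_vec m j = B *\<^sub>v unit_vec m j" by (rule h) simp
  hence "(A *\<^sub>v unit_vec m j) $ i = (B *\<^sub>v unit_vec m j) $ i" by simp
  thus "A $$ (i, j) = B $$ (i, j)" using A B ij
    by (simp add: index_mult_mat_vec scalar_prod_right_unit)
qed (use A B in auto)

lemma sp_self_nonneg: "0 \<le> (x::real vec) \<bullet> x"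
  unfolding scalar_prod_def by (intro sum_nonneg) auto

lemma sp_self_zero: assumes "x \<in> carrier_vec n" "(x::real vec) \<bullet> x = 0" shows "x = 0\<^sub>v n"
proof -
  have "\<forall>i\<in>{0..<n}. x$i * x$i = 0" using assms
    by (subst sum_nonneg_eq_0_iff[symmetric]) (auto simp: scalar_prod_def)
  thus ?thesis using assms by (intro eq_vecI) auto
qed

lemma householder:
  fixes v :: "real vec"
  assumes v: "v \<in> carrier_vec n" "v \<bullet> v = 1" and n: "0 < n"
  shows "\<exists>H. H \<in> carrier_mat n n \<and> H\<^sup>T = H \<and> H * H = 1\<^sub>m n \<and> H *\<^sub>v unit_vec n 0 = v"
proof (cases "v = unit_vec n 0")
  case True
  then show ?thesis by (intro exI[of _ "1\<^sub>m n"]) auto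
next
  case False
  define e :: "real vec" where "e = unit_vec n 0"
  have e: "e \<in> carrier_vec n" unfolding e_def by simp
  define w where "w = v - e"
  have w: "w \<in> carrier_vec n" unfolding w_def using v e by simp
  have "w \<noteq> 0\<^sub>v n"
  proof
    assume w0: "w = 0\<^sub>v n"
    have "v = e"
    proof (rule eq_vecI)
      fix i assume "i < dim_vec e"
      hence "i < n" using e by simp
      thus "v $ i = e $ i" using arg_cong[OF w0, of "\<lambda>x. x $ i"] v e unfolding w_def by simp
    qed (use v e in simp)
    thus False using False unfolding e_def by simp
  qed
  hence wpos: "w \<bullet> w \<noteq> 0" using sp_self_zero[OF w] by auto
  have ww: "w \<bullet> w = 2 - 2 * v$0"
  proof -
    have "w \<bullet> w = v \<bullet> v - v \<bullet> e - (e \<bullet> v - e \<bullet> e)" unfolding w_def using v e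
      by (simp add: minus_scalar_prod_distrib scalar_prod_minus_distrib)
    also have "e \<bullet> v = v \<bullet> e" using comm_scalar_prod[OF e v(1)] .
    also have "v \<bullet> e = v $ 0" unfolding e_def using n by (simp add: scalar_prod_right_unit)
    also have "e \<bullet> e = 1" unfolding e_def using n by (simp add: scalar_prod_right_unit)
    finally show ?thesis using v by simp
  qed
  define c where "c = 2 / (w \<bullet> w)"
  define H where "H = mat n n (\<lambda>(i,j). (if i = j then 1 else 0) - c * w$i * w$j)"
  have H: "H \<in> carrier_mat n n" unfolding H_def by simp
  have Hx: "H *\<^sub>v x = x - (c * (w \<bullet> x)) \<cdot>\<^sub>v w" if x: "x \<in> carrier_vec n" for x
  proof (rule eq_vecI)
    fix i assume "i < dim_vec (x - (c * (w \<bullet> x)) \<cdot>\<^sub>v w)"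
    hence i: "i < n" using x w by simp
    have "(H *\<^sub>v x) $ i = (\<Sum>j<n. ((if i = j then 1 else 0) - c * w$i * w$j) * x$j)"
      using i x by (simp add: H_def scalar_prod_def row_def lessThan_atLeast0)
    also have "\<dots> = (\<Sum>j<n. (if i = j then x$j else 0) - c * w$i * (w$j * x$j))"
      by (intro sum.cong) (auto simp: algebra_simps)
    also have "\<dots> = x$i - c * w$i * (\<Sum>j<n. w$j * x$j)"
      using i by (simp add: sum_subtractf sum_distrib_left)
    finally show "(H *\<^sub>v x) $ i = (x - (c * (w \<bullet> x)) \<cdot>\<^sub>v w) $ i"
      using i x w by (simp add: scalar_prod_def lessThan_atLeast0)
  qed (use x w in \<open>simp add: H_def\<close>)
  have HHx: "H *\<^sub>v (H *\<^sub>v x) = x" if x: "x \<in> carrier_vec n" for x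
  proof -
    define a where "a = c * (w \<bullet> x)"
    have "w \<bullet> (x - a \<cdot>\<^sub>v w) = w \<bullet> x - a * (w \<bullet> w)"
      using w x by (simp add: scalar_prod_minus_distrib scalar_prod_smult_distrib)
    also have "\<dots> = - (w \<bullet> x)" unfolding a_def c_def using wpos by simp
    finally have 1: "w \<bullet> (x - a \<cdot>\<^sub>v w) = - (w \<bullet> x)" .
    have 2: "x - a \<cdot>\<^sub>v w \<in> carrier_vec n" using x w by simp
    show ?thesis unfolding Hx[OF x, folded a_def] Hx[OF 2] 1
      by (rule eq_vecI) (use x w in \<open>auto simp: a_def\<close>)
  qed
  have HT: "H\<^sup>T = H" unfolding H_def by (intro eq_matI) auto
  have HH: "H * H = 1\<^sub>m n"
    by (rule mat_eq_by_vec[of _ n n]) (use H HHx in \<open>auto simp: assoc_mult_mat_vec\<close>)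
  have "w \<bullet> e = v$0 - 1" unfolding w_def using v e n
    by (simp add: minus_scalar_prod_distrib e_def scalar_prod_right_unit)
  hence "c * (w \<bullet> e) = -1" using ww wpos unfolding c_def by (simp add: field_simps)
  hence "H *\<^sub>v e = v" using Hx[OF e] w v e unfolding w_def by auto
  thus ?thesis using H HT HH unfolding e_def by blast
qed

definition bord :: "'a::comm_ring_1 \<Rightarrow> 'a mat \<Rightarrow> 'a mat" where
  "bord a M = mat (Suc (dim_row M)) (Suc (dim_col M))
     (\<lambda>(i,j). if i = 0 \<and> j = 0 then a else if i = 0 \<or> j = 0 then 0 else M $$ (i-1, j-1))"

lemma bord_carrier[simp]: "M \<in> carrier_mat n m \<Longrightarrow> bord a M \<in> carrier_mat (Suc n) (Suc m)"
  unfolding bord_def by auto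

lemma bord_mult:
  assumes M: "M \<in> carrier_mat n k" and N: "N \<in> carrier_mat k m"
  shows "bord a M * bord b N = bord (a * b) (M * N)"
proof (rule eq_matI)
  fix i j assume ij: "i < dim_row (bord (a * b) (M * N))" "j < dim_col (bord (a * b) (M * N))"
  hence i: "i < Suc n" and j: "j < Suc m" using M N by (auto simp: bord_def)
  have "(bord a M * bord b N) $$ (i, j) = (\<Sum>l<Suc k. bord a M $$ (i,l) * bord b N $$ (l,j))"
    using i j M N unfolding index_mult_mat(1)[of i _ j] by (auto simp: scalar_prod_def atLeast0LessThan bord_def simp del: sum.lessThan_Suc)
  also have "\<dots> = bord a M $$ (i,0) * bord b N $$ (0,j) + (\<Sum>l<k. bord a M $$ (i,Suc l) * bord b N $$ (Suc l,j))"
    by (rule sum.lessThan_Suc_shift)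
  also have "\<dots> = bord (a * b) (M * N) $$ (i, j)"
  proof (cases i)
    case 0
    then show ?thesis using i j M N by (cases j) (auto simp: bord_def)
  next
    case (Suc i')
    then show ?thesis using i j M N
      by (cases j) (auto simp: bord_def scalar_prod_def row_def col_def lessThan_atLeast0)
  qed
  finally show "(bord a M * bord b N) $$ (i, j) = bord (a * b) (M * N) $$ (i, j)" .
qed (use M N in \<open>auto simp: bord_def\<close>)

lemma bord_transpose: "(bord a M)\<^sup>T = bord a (M\<^sup>T)"
  unfolding bord_def by (intro eq_matI) auto

lemma bord_one: "bord 1 (1\<^sub>m n) = 1\<^sub>m (Suc n)"
  unfolding bord_def by (intro eq_matI) auto

definition diagm :: "nat \<Rightarrow> (nat \<Rightarrow> real) \<Rightarrow> real mat" where
  "diagm n d = mat n n (\<lambda>(i,j). if i = j then d i else 0)"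

lemma bord_diagm: "bord a (diagm n d) = diagm (Suc n) (\<lambda>i. if i = 0 then a else d (i - 1))"
  unfolding bord_def diagm_def by (intro eq_matI) auto

lemma conj_mult:
  fixes H P M :: "'a::comm_ring_1 mat"
  assumes H: "H \<in> carrier_mat n n" and P: "P \<in> carrier_mat n n" and M: "M \<in> carrier_mat n n"
  shows "(H * P)\<^sup>T * M * (H * P) = P\<^sup>T * (H\<^sup>T * M * H) * P"
proof -
  have "(H * P)\<^sup>T = P\<^sup>T * H\<^sup>T" by (rule transpose_mult) (use H P in auto)
  thus ?thesis using H P M by (simp add: assoc_mult_mat[of _ n n _ n _ n])
qed

lemma spectral:
  fixes A :: "real mat"
  shows "A \<in> carrier_mat n n \<Longrightarrow> A\<^sup>T = A \<Longrightarrow>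
    \<exists>Q d. Q \<in> carrier_mat n n \<and> Q\<^sup>T * Q = 1\<^sub>m n \<and> Q\<^sup>T * A * Q = diagm n d"
proof (induction n arbitrary: A)
  case 0
  show ?case
    by (rule exI[of _ "1\<^sub>m 0"], rule exI[of _ "\<lambda>_. 0"]) (use 0 in \<open>auto intro!: eq_matI simp: diagm_def\<close>)
next
  case (Suc m)
  let ?n = "Suc m"
  have A: "A \<in> carrier_mat ?n ?n" and sym: "A\<^sup>T = A" by fact+
  obtain e v0 where v0: "v0 \<in> carrier_vec ?n" "v0 \<noteq> 0\<^sub>v ?n" "A *\<^sub>v v0 = e \<cdot>\<^sub>v v0"
    using sym_real_eigen[OF A sym] by auto
  have "v0 \<bullet> v0 \<noteq> 0" using sp_self_zero[OF v0(1)] v0(2) by auto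
  hence pos: "v0 \<bullet> v0 > 0" using sp_self_nonneg[of v0] by linarith
  define v where "v = (1 / sqrt (v0 \<bullet> v0)) \<cdot>\<^sub>v v0"
  have v: "v \<in> carrier_vec ?n" unfolding v_def using v0 by simp
  have vv: "v \<bullet> v = 1" unfolding v_def using v0(1) pos
    by (simp add: scalar_prod_smult_distrib smult_scalar_prod_distrib[OF v0(1) v0(1)])
  have Av: "A *\<^sub>v v = e \<cdot>\<^sub>v v" unfolding v_def using v0 A
    by (simp add: mult_mat_vec smult_smult_assoc mult.commute)
  obtain H where H: "H \<in> carrier_mat ?n ?n" "H\<^sup>T = H" "H * H = 1\<^sub>m ?n" "H *\<^sub>v unit_vec ?n 0 = v"
    using householder[OF v vv] by auto
  define A' where "A' = H * A * H"
  have A': "A' \<in> carrier_mat ?n ?n" unfolding A'_def using H A by simp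
  have A'T: "A'\<^sup>T = A'"
  proof -
    have "A'\<^sup>T = H\<^sup>T * (H * A)\<^sup>T" unfolding A'_def
      by (rule transpose_mult) (use H A in auto)
    also have "(H * A)\<^sup>T = A\<^sup>T * H\<^sup>T" by (rule transpose_mult) (use H A in auto)
    also have "H\<^sup>T * (A\<^sup>T * H\<^sup>T) = A'" unfolding A'_def using H A sym
      by (simp add: assoc_mult_mat[of _ ?n ?n _ ?n _ ?n])
    finally show ?thesis .
  qed
  have Hv: "H *\<^sub>v v = unit_vec ?n 0" using H
    by (metis assoc_mult_mat_vec one_mult_mat_vec unit_vec_carrier)
  have A'e: "A' *\<^sub>v unit_vec ?n 0 = e \<cdot>\<^sub>v unit_vec ?n 0"
    unfolding A'_def using H A v Av Hv
    by (simp add: assoc_mult_mat_vec[of _ ?n ?n _ ?n] mult_mat_vec)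
  have col0: "A' $$ (i, 0) = (if i = 0 then e else 0)" if "i < ?n" for i
  proof -
    have "A' $$ (i, 0) = (A' *\<^sub>v unit_vec ?n 0) $ i" using A' that
      by (simp add: index_mult_mat_vec scalar_prod_right_unit)
    thus ?thesis unfolding A'e using that by simp
  qed
  have row0: "A' $$ (0, j) = (if j = 0 then e else 0)" if "j < ?n" for j
    using col0[OF that] A'T A' that by (metis carrier_matD index_transpose_mat(1) zero_less_Suc)
  define A3 where "A3 = mat m m (\<lambda>(i,j). A' $$ (Suc i, Suc j))"
  have A3: "A3 \<in> carrier_mat m m" unfolding A3_def by simp
  have A3T: "A3\<^sup>T = A3" unfolding A3_def using A'T A'
    by (intro eq_matI) (auto, metis Suc_less_eq carrier_matD index_transpose_mat(1))
  obtain Q3 d3 where Q3: "Q3 \<in> carrier_mat m m" "Q3\<^sup>T * Q3 = 1\<^sub>m m" "Q3\<^sup>T * A3 * Q3 = diagm m d3"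
    using Suc.IH[OF A3 A3T] by auto
  have A'b: "A' = bord e A3"
    unfolding bord_def A3_def using A' col0 row0
    by (intro eq_matI) auto
  define Q where "Q = H * bord 1 Q3"
  have Q: "Q \<in> carrier_mat ?n ?n" unfolding Q_def using H Q3 by simp
  have QQ: "Q\<^sup>T * Q = 1\<^sub>m ?n"
  proof -
    have "Q\<^sup>T * Q = Q\<^sup>T * 1\<^sub>m ?n * Q" using Q by simp
    also have "\<dots> = (bord 1 Q3)\<^sup>T * (H\<^sup>T * 1\<^sub>m ?n * H) * bord 1 Q3" unfolding Q_def
      by (rule conj_mult) (use H Q3 in auto)
    also have "\<dots> = (bord 1 Q3)\<^sup>T * (H\<^sup>T * H) * bord 1 Q3" using H by simp
    also have "\<dots> = (bord 1 Q3)\<^sup>T * bord 1 Q3" using H Q3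
      unfolding H(2) H(3) by (subst right_mult_one_mat[of "(bord 1 Q3)\<^sup>T" ?n ?n]) auto
    also have "\<dots> = bord 1 (Q3\<^sup>T * Q3)" unfolding bord_transpose
      using bord_mult[of "Q3\<^sup>T" m m Q3 m 1 1] Q3 by simp
    finally show ?thesis using Q3 by (simp add: bord_one)
  qed
  have QAQ: "Q\<^sup>T * A * Q = bord e (diagm m d3)"
  proof -
    have "Q\<^sup>T * A * Q = (bord 1 Q3)\<^sup>T * (H\<^sup>T * A * H) * bord 1 Q3" unfolding Q_def
      by (rule conj_mult) (use H Q3 A in auto)
    also have "H\<^sup>T * A * H = bord e A3" using H A'b unfolding A'_def by simp
    also have "(bord 1 Q3)\<^sup>T * bord e A3 * bord 1 Q3 = bord e (Q3\<^sup>T * A3 * Q3)" using A3 Q3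
      by (simp add: bord_transpose bord_mult[of _ m m])
    finally show ?thesis using Q3 by simp
  qed
  show ?case using Q QQ QAQ unfolding bord_diagm by blast
qed

lemma qf_mat:
  fixes A :: "real mat"
  assumes A: "A \<in> carrier_mat n n" and x: "x \<in> carrier_vec n"
  shows "x \<bullet> (A *\<^sub>v x) = (\<Sum>k<n. \<Sum>l<n. x$k * A$$(k,l) * x$l)"
  using A x by (simp add: scalar_prod_def row_def lessThan_atLeast0 sum_distrib_left mult.assoc)

lemma sum3_swap:
  fixes x y :: "nat \<Rightarrow> real"
  shows "(\<Sum>k\<in>A. \<Sum>l\<in>B. x k * (\<Sum>p\<in>P. F p k l) * y l) = (\<Sum>p\<in>P. \<Sum>k\<in>A. \<Sum>l\<in>B. x k * F p k l * y l)"
proof -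
  have "(\<Sum>k\<in>A. \<Sum>l\<in>B. x k * (\<Sum>p\<in>P. F p k l) * y l) = (\<Sum>k\<in>A. \<Sum>l\<in>B. \<Sum>p\<in>P. x k * F p k l * y l)"
    by (simp add: sum_distrib_left sum_distrib_right)
  also have "\<dots> = (\<Sum>k\<in>A. \<Sum>p\<in>P. \<Sum>l\<in>B. x k * F p k l * y l)"
    by (intro sum.cong refl) (rule sum.swap)
  also have "\<dots> = (\<Sum>p\<in>P. \<Sum>k\<in>A. \<Sum>l\<in>B. x k * F p k l * y l)" by (rule sum.swap)
  finally show ?thesis .
qed

lemma Lij_entry:
  assumes "k < n" "l < n"
  shows "Lij n i j $$ (k,l) = ((if k = i then 1 else 0) - (if k = j then 1 else 0)) *
                              ((if l = i then 1 else 0) - (if l = j then 1 else 0))"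
  using assms unfolding Lij_def Let_def by (auto simp: unit_vec_def)

lemma sum_delta1: "i < (n::nat) \<Longrightarrow> (\<Sum>k<n. (f k :: real) * (if k = i then 1 else 0)) = f i"
proof -
  assume i: "i < n"
  have "(\<Sum>k<n. (f k :: real) * (if k = i then 1 else 0)) = (\<Sum>k<n. if k = i then f k else 0)"
    by (intro sum.cong) auto
  also have "\<dots> = f i" using i by (simp add: sum.delta sum.delta')
  finally show ?thesis .
qed

lemma sum_delta2: "i < (n::nat) \<Longrightarrow> j < n \<Longrightarrow>
   (\<Sum>k<n. (f k :: real) * ((if k = i then 1 else 0) - (if k = j then 1 else 0))) = f i - f j"
  by (simp add: right_diff_distrib sum_subtractf sum_delta1)

lemma qf_Lij:
  fixes x :: "real vec"
  assumes i: "i < n" and j: "j < n"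
  shows "(\<Sum>k<n. \<Sum>l<n. x$k * Lij n i j $$ (k,l) * x$l) = (x$i - x$j)^2"
proof -
  define a where "a = (\<lambda>k::nat. ((if k = i then 1 else 0) - (if k = j then 1 else 0)) :: real)"
  have "(\<Sum>k<n. \<Sum>l<n. x$k * Lij n i j $$ (k,l) * x$l) = (\<Sum>k<n. \<Sum>l<n. (x$k * a k) * (a l * x$l))"
    by (intro sum.cong refl) (simp add: Lij_entry a_def)
  also have "\<dots> = (\<Sum>k<n. x$k * a k) * (\<Sum>l<n. a l * x$l)"
    by (simp add: sum_product)
  also have "(\<Sum>k<n. x$k * a k) = x$i - x$j"
    using i j unfolding a_def by (rule sum_delta2)
  also have "(\<Sum>l<n. a l * x$l) = x$i - x$j"
    using sum_delta2[OF i j, of "\<lambda>k. x$k"] unfolding a_def by (simp add: mult.commute)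
  finally show ?thesis by (simp add: power2_eq_square)
qed

lemma Lw_carrier[simp]: "Lw N E w \<in> carrier_mat (2*N) (2*N)"
  unfolding Lw_def by simp

lemma Lw_entry:
  assumes "k < 2*N" "l < 2*N"
  shows "Lw N E w $$ (k,l) = (\<Sum>i<N. w i * Lij (2*N) i (N+i) $$ (k,l)) + (\<Sum>(i,j)\<in>E. Lij (2*N) i j $$ (k,l))"
  using assms unfolding Lw_def L0_def by simp

lemma Lij_sym: "k < n \<Longrightarrow> l < n \<Longrightarrow> Lij n i j $$ (k,l) = Lij n i j $$ (l,k)"
  by (simp add: Lij_entry)

lemma Lw_sym: "(Lw N E w)\<^sup>T = Lw N E w"
proof (rule eq_matI)
  fix k l assume "k < dim_row (Lw N E w)" "l < dim_col (Lw N E w)"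
  hence kl: "k < 2*N" "l < 2*N" using Lw_carrier[of N E w] by auto
  have "(Lw N E w)\<^sup>T $$ (k, l) = Lw N E w $$ (l, k)" using kl by (simp add: Lw_def)
  thus "(Lw N E w)\<^sup>T $$ (k, l) = Lw N E w $$ (k, l)"
    using kl by (simp add: Lw_entry Lij_sym[of k "2*N" l] case_prod_beta)
qed (simp_all add: Lw_def)

lemma qf_Lw:
  fixes x :: "real vec"
  assumes E: "E \<subseteq> {(i,j). i < 2*N \<and> j < 2*N}" and x: "x \<in> carrier_vec (2*N)"
  shows "x \<bullet> (Lw N E w *\<^sub>v x) = (\<Sum>i<N. w i * (x$i - x$(N+i))^2) + (\<Sum>(i,j)\<in>E. (x$i - x$j)^2)"
proof -
  let ?n = "2*N"
  have "x \<bullet> (Lw N E w *\<^sub>v x) = (\<Sum>k<?n. \<Sum>l<?n. x$k * Lw N E w $$ (k,l) * x$l)"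
    by (rule qf_mat[OF Lw_carrier x])
  also have "\<dots> = (\<Sum>k<?n. \<Sum>l<?n. x$k * (\<Sum>i<N. w i * Lij ?n i (N+i) $$ (k,l)) * x$l)
                + (\<Sum>k<?n. \<Sum>l<?n. x$k * (\<Sum>p\<in>E. Lij ?n (fst p) (snd p) $$ (k,l)) * x$l)"
    by (simp add: Lw_entry distrib_left distrib_right sum.distrib case_prod_beta)
  also have "(\<Sum>k<?n. \<Sum>l<?n. x$k * (\<Sum>i<N. w i * Lij ?n i (N+i) $$ (k,l)) * x$l)
           = (\<Sum>i<N. \<Sum>k<?n. \<Sum>l<?n. x$k * (w i * Lij ?n i (N+i) $$ (k,l)) * x$l)"
    by (rule sum3_swap)
  also have "\<dots> = (\<Sum>i<N. w i * (x$i - x$(N+i))^2)"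
  proof (intro sum.cong refl)
    fix i assume "i \<in> {..<N}"
    hence i: "i < ?n" "N + i < ?n" by auto
    have "(\<Sum>k<?n. \<Sum>l<?n. x$k * (w i * Lij ?n i (N+i) $$ (k,l)) * x$l)
        = w i * (\<Sum>k<?n. \<Sum>l<?n. x$k * Lij ?n i (N+i) $$ (k,l) * x$l)"
      by (simp add: sum_distrib_left algebra_simps)
    also have "\<dots> = w i * (x$i - x$(N+i))^2" using qf_Lij[OF i] by simp
    finally show "(\<Sum>k<?n. \<Sum>l<?n. x$k * (w i * Lij ?n i (N+i) $$ (k,l)) * x$l) = w i * (x$i - x$(N+i))^2" .
  qed
  also have "(\<Sum>k<?n. \<Sum>l<?n. x$k * (\<Sum>p\<in>E. Lij ?n (fst p) (snd p) $$ (k,l)) * x$l)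
           = (\<Sum>p\<in>E. \<Sum>k<?n. \<Sum>l<?n. x$k * Lij ?n (fst p) (snd p) $$ (k,l) * x$l)"
    by (rule sum3_swap)
  also have "\<dots> = (\<Sum>(i,j)\<in>E. (x$i - x$j)^2)"
    unfolding case_prod_beta
  proof (intro sum.cong refl)
    fix p assume "p \<in> E"
    hence "fst p < ?n" "snd p < ?n" using E by auto
    thus "(\<Sum>k<?n. \<Sum>l<?n. x$k * Lij ?n (fst p) (snd p) $$ (k,l) * x$l) = (x$(fst p) - x$(snd p))^2"
      by (rule qf_Lij)
  qed
  finally show ?thesis .
qed

lemma smult_one_mv: assumes x: "x \<in> carrier_vec n" shows "(c \<cdot>\<^sub>m 1\<^sub>m n) *\<^sub>v x = (c::real) \<cdot>\<^sub>v x"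
proof (rule eq_vecI)
  fix i assume "i < dim_vec (c \<cdot>\<^sub>v x)"
  hence i: "i < n" using x by simp
  have "((c \<cdot>\<^sub>m 1\<^sub>m n) *\<^sub>v x) $ i = (\<Sum>j<n. x$j * (c * (if i = j then 1 else 0)))"
    using i x by (simp add: index_mult_mat_vec scalar_prod_def row_def lessThan_atLeast0 mult.commute)
  also have "\<dots> = (\<Sum>j<n. (c * x$j) * (if j = i then 1 else 0))" by (intro sum.cong) auto
  also have "\<dots> = c * x$i" using sum_delta1[OF i, of "\<lambda>j. c * x$j"] .
  finally show "((c \<cdot>\<^sub>m 1\<^sub>m n) *\<^sub>v x) $ i = (c \<cdot>\<^sub>v x) $ i" using i x by simp
qed (use x in simp)

lemma ones_mv: "x \<in> carrier_vec n \<Longrightarrow> ones_mat n *\<^sub>v x = vec n (\<lambda>_. \<Sum>k<n. (x::real vec)$k)"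
  by (rule eq_vecI) (auto simp: ones_mat_def index_mult_mat_vec scalar_prod_def row_def lessThan_atLeast0)

lemma ones_qf: "x \<in> carrier_vec n \<Longrightarrow> x \<bullet> (ones_mat n *\<^sub>v x) = (\<Sum>k<n. (x::real vec)$k)^2"
  by (simp add: ones_mv scalar_prod_def lessThan_atLeast0 power2_eq_square sum_distrib_right)

lemma mv_LI: assumes A: "A \<in> carrier_mat n n" and x: "x \<in> carrier_vec n"
  shows "(A - c \<cdot>\<^sub>m 1\<^sub>m n) *\<^sub>v x = A *\<^sub>v x - (c::real) \<cdot>\<^sub>v x"
  using A x by (simp add: minus_mult_distrib_mat_vec smult_one_mv)

lemma mv_LJI: assumes A: "A \<in> carrier_mat n n" and x: "x \<in> carrier_vec n"
  shows "(A + m \<cdot>\<^sub>m ones_mat n - c \<cdot>\<^sub>m 1\<^sub>m n) *\<^sub>v x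
       = A *\<^sub>v x + m \<cdot>\<^sub>v vec n (\<lambda>_. \<Sum>k<n. x$k) - (c::real) \<cdot>\<^sub>v x"
proof -
  have "(m \<cdot>\<^sub>m ones_mat n) *\<^sub>v x = m \<cdot>\<^sub>v vec n (\<lambda>_. \<Sum>k<n. x$k)"
    using x by (intro eq_vecI) (auto simp: ones_mat_def index_mult_mat_vec scalar_prod_def row_def lessThan_atLeast0 sum_distrib_left)
  moreover have "(A + m \<cdot>\<^sub>m ones_mat n - c \<cdot>\<^sub>m 1\<^sub>m n) *\<^sub>v x = (A + m \<cdot>\<^sub>m ones_mat n) *\<^sub>v x - (c \<cdot>\<^sub>m 1\<^sub>m n) *\<^sub>v x"
    by (rule minus_mult_distrib_mat_vec) (use A x in \<open>auto simp: ones_mat_def\<close>)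
  moreover have "(A + m \<cdot>\<^sub>m ones_mat n) *\<^sub>v x = A *\<^sub>v x + (m \<cdot>\<^sub>m ones_mat n) *\<^sub>v x"
    by (rule add_mult_distrib_mat_vec) (use A x in \<open>auto simp: ones_mat_def\<close>)
  ultimately show ?thesis using x by (simp add: smult_one_mv)
qed

lemma nsd_iff:
  assumes A: "A \<in> carrier_mat n n"
  shows "nsd (A - c \<cdot>\<^sub>m 1\<^sub>m n) \<longleftrightarrow> (\<forall>x\<in>carrier_vec n. x \<bullet> (A *\<^sub>v x) \<le> (c::real) * (x \<bullet> x))"
proof -
  have "x \<bullet> ((A - c \<cdot>\<^sub>m 1\<^sub>m n) *\<^sub>v x) = x \<bullet> (A *\<^sub>v x) - c * (x \<bullet> x)" if x: "x \<in> carrier_vec n" for x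
    using A x by (simp add: mv_LI scalar_prod_minus_distrib[of _ n] scalar_prod_smult_distrib[of _ n])
  thus ?thesis unfolding nsd_def using A by auto
qed

lemma psd_iff:
  assumes A: "A \<in> carrier_mat n n"
  shows "psd (A + m \<cdot>\<^sub>m ones_mat n - c \<cdot>\<^sub>m 1\<^sub>m n) \<longleftrightarrow>
     (\<forall>x\<in>carrier_vec n. (c::real) * (x \<bullet> x) \<le> x \<bullet> (A *\<^sub>v x) + m * (\<Sum>k<n. x$k)^2)"
proof -
  have "x \<bullet> ((A + m \<cdot>\<^sub>m ones_mat n - c \<cdot>\<^sub>m 1\<^sub>m n) *\<^sub>v x) = x \<bullet> (A *\<^sub>v x) + m * (\<Sum>k<n. x$k)^2 - c * (x \<bullet> x)"
    if x: "x \<in> carrier_vec n" for x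
  proof -
    have "x \<bullet> (vec n (\<lambda>_. \<Sum>k<n. x$k)) = (\<Sum>k<n. x$k)^2"
      using x by (simp add: scalar_prod_def lessThan_atLeast0 power2_eq_square sum_distrib_right)
    thus ?thesis using A x
      by (simp add: mv_LJI scalar_prod_minus_distrib[of _ n] scalar_prod_add_distrib[of _ n]
          scalar_prod_smult_distrib[of _ n])
  qed
  thus ?thesis unfolding psd_def using A by (auto simp: ones_mat_def)
qed

lemma cs_lemma:
  fixes M :: "real mat"
  assumes M: "M \<in> carrier_mat n n" and sym: "M\<^sup>T = M"
    and pos: "\<And>z. z \<in> carrier_vec n \<Longrightarrow> 0 \<le> z \<bullet> (M *\<^sub>v z)"
    and x: "x \<in> carrier_vec n" and x0: "x \<bullet> (M *\<^sub>v x) = 0"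
  shows "M *\<^sub>v x = 0\<^sub>v n"
proof -
  have symf: "z \<bullet> (M *\<^sub>v y) = y \<bullet> (M *\<^sub>v z)" if z: "z \<in> carrier_vec n" and y: "y \<in> carrier_vec n" for z y
  proof -
    have "z \<bullet> (M *\<^sub>v y) = (M\<^sup>T *\<^sub>v z) \<bullet> y" using transpose_vec_mult_scalar[OF M y z] by simp
    also have "\<dots> = y \<bullet> (M *\<^sub>v z)" unfolding sym using M z y by (simp add: comm_scalar_prod[of _ n])
    finally show ?thesis .
  qed
  define y where "y = M *\<^sub>v x"
  have y: "y \<in> carrier_vec n" unfolding y_def using M x by simp
  define b where "b = y \<bullet> (M *\<^sub>v x)"
  define q where "q = y \<bullet> (M *\<^sub>v y)"
  have q: "0 \<le> q" unfolding q_def by (rule pos[OF y])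
  have expand: "(x + t \<cdot>\<^sub>v y) \<bullet> (M *\<^sub>v (x + t \<cdot>\<^sub>v y)) = 2 * t * b + t^2 * q" for t
  proof -
    have "(x + t \<cdot>\<^sub>v y) \<bullet> (M *\<^sub>v (x + t \<cdot>\<^sub>v y))
       = x \<bullet> (M *\<^sub>v x) + t * (x \<bullet> (M *\<^sub>v y)) + t * (y \<bullet> (M *\<^sub>v x)) + t * t * (y \<bullet> (M *\<^sub>v y))"
      using M x y by (simp add: mult_add_distrib_mat_vec[of M n n] mult_mat_vec[of M n n]
          scalar_prod_add_distrib[of _ n] add_scalar_prod_distrib[of _ n]
          scalar_prod_smult_distrib[of _ n] smult_scalar_prod_distrib[of _ n] algebra_simps)
    also have "x \<bullet> (M *\<^sub>v y) = b" unfolding b_def using symf[OF x y] .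
    finally show ?thesis using x0 unfolding b_def q_def by (simp add: power2_eq_square algebra_simps)
  qed
  have b0: "b = 0"
  proof (rule ccontr)
    assume bn: "b \<noteq> 0"
    define s where "s = 1 / (q + 1)"
    have s: "0 < s" "s * q \<le> 1" using q unfolding s_def by auto
    define t where "t = - b * s"
    have "0 \<le> 2 * t * b + t^2 * q" using pos[of "x + t \<cdot>\<^sub>v y"] x y expand[of t] by simp
    moreover have "t^2 * q = b^2 * s * (s * q)" unfolding t_def by (simp add: power2_eq_square algebra_simps)
    moreover have "b^2 * s * (s * q) \<le> b^2 * s * 1" using s by (intro mult_left_mono) auto
    moreover have "2 * t * b = - 2 * (b^2 * s)" unfolding t_def by (simp add: power2_eq_square algebra_simps)
    moreover have "0 < b^2 * s" using bn s by simp
    ultimately show False by linarith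
  qed
  have "y \<bullet> y = 0" using b0 unfolding b_def y_def by simp
  thus ?thesis using sp_self_zero[OF y] unfolding y_def by simp
qed

lemma proots_lin_prod: "proots (\<Prod>a\<leftarrow>xs. [:- a, 1:]) = mset (xs :: real list)"
proof (induction xs)
  case (Cons a xs)
  have nz: "(\<Prod>a\<leftarrow>xs. [:- a, 1:]) \<noteq> (0 :: real poly)"
    by (subst prod_list_zero_iff) auto
  have "proots (\<Prod>a\<leftarrow>a # xs. [:- a, 1:]) = proots ([:- a, 1:] * (\<Prod>a\<leftarrow>xs. [:- a, 1:]))" by simp
  also have "\<dots> = proots [:- a, 1:] + proots (\<Prod>a\<leftarrow>xs. [:- a, 1:])"
    by (rule proots_mult) (use nz in auto)
  finally show ?case using Cons by (simp add: proots_linear_factor)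
qed simp

lemma spec_facts:
  fixes L :: "real mat"
  assumes L: "L \<in> carrier_mat n n" and sym: "L\<^sup>T = L"
  shows "\<exists>Q d. Q \<in> carrier_mat n n \<and> Q\<^sup>T * Q = 1\<^sub>m n \<and> Q * Q\<^sup>T = 1\<^sub>m n \<and>
     sorted_eigs L = sort (map d [0..<n]) \<and>
     (\<forall>y\<in>carrier_vec n. y \<bullet> (L *\<^sub>v y) = (\<Sum>k<n. d k * ((Q\<^sup>T *\<^sub>v y)$k)^2) \<and>
                          y \<bullet> y = (\<Sum>k<n. ((Q\<^sup>T *\<^sub>v y)$k)^2))"
proof -
  obtain Q d where Q: "Q \<in> carrier_mat n n" and QQ: "Q\<^sup>T * Q = 1\<^sub>m n" and QLQ: "Q\<^sup>T * L * Q = diagm n d"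
    using spectral[OF L sym] by blast
  have QT: "Q\<^sup>T \<in> carrier_mat n n" using Q by simp
  have QQ': "Q * Q\<^sup>T = 1\<^sub>m n" by (rule mat_mult_left_right_inverse[OF QT Q QQ])
  have D: "diagm n d \<in> carrier_mat n n" unfolding diagm_def by simp
  have Leq: "L = Q * diagm n d * Q\<^sup>T"
  proof -
    have "Q * diagm n d * Q\<^sup>T = Q * (Q\<^sup>T * L * Q) * Q\<^sup>T" unfolding QLQ ..
    also have "\<dots> = (Q * Q\<^sup>T) * L * (Q * Q\<^sup>T)" using Q L
      by (simp add: assoc_mult_mat[of _ n n _ n _ n])
    also have "\<dots> = L" unfolding QQ' using L by simp
    finally show ?thesis by simp
  qed
  have "similar_mat L (diagm n d)"
    unfolding similar_mat_def similar_mat_wit_def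
    by (rule exI[of _ Q], rule exI[of _ "Q\<^sup>T"]) (use L Q D QQ QQ' Leq in \<open>auto simp: Let_def\<close>)
  hence "char_poly L = char_poly (diagm n d)" by (rule char_poly_similar)
  also have "\<dots> = (\<Prod>a\<leftarrow>diag_mat (diagm n d). [:- a, 1:])"
    by (rule char_poly_upper_triangular[OF D]) (auto simp: upper_triangular_def diagm_def)
  also have "diag_mat (diagm n d) = map d [0..<n]"
    unfolding diag_mat_def diagm_def by (intro nth_equalityI) auto
  finally have cp: "char_poly L = (\<Prod>a\<leftarrow>map d [0..<n]. [:- a, 1:])" .
  have se: "sorted_eigs L = sort (map d [0..<n])"
    unfolding sorted_eigs_def cp proots_lin_prod sorted_list_of_multiset_mset ..
  have exp: "y \<bullet> (L *\<^sub>v y) = (\<Sum>k<n. d k * ((Q\<^sup>T *\<^sub>v y)$k)^2) \<and> y \<bullet> y = (\<Sum>k<n. ((Q\<^sup>T *\<^sub>v y)$k)^2)"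
    if y: "y \<in> carrier_vec n" for y
  proof -
    define c where "c = Q\<^sup>T *\<^sub>v y"
    have c: "c \<in> carrier_vec n" unfolding c_def using Q y by simp
    have yQc: "y = Q *\<^sub>v c" unfolding c_def using Q y QQ'
      by (simp add: assoc_mult_mat_vec[symmetric, of Q n n "Q\<^sup>T" n y])
    have Dc: "diagm n d *\<^sub>v c = vec n (\<lambda>k. d k * c$k)"
    proof (rule eq_vecI)
      fix i assume "i < dim_vec (vec n (\<lambda>k. d k * c$k))"
      hence i: "i < n" by simp
      have "(diagm n d *\<^sub>v c) $ i = (\<Sum>j<n. c$j * (if j = i then d i else 0))"
        using i c by (simp add: diagm_def index_mult_mat_vec scalar_prod_def row_def lessThan_atLeast0
            mult.commute cong: if_cong) (intro sum.cong, auto)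
      also have "\<dots> = (\<Sum>j<n. (c$j * d i) * (if j = i then 1 else 0))" by (intro sum.cong) auto
      also have "\<dots> = c$i * d i" using sum_delta1[OF i, of "\<lambda>j. c$j * d i"] .
      finally show "(diagm n d *\<^sub>v c) $ i = vec n (\<lambda>k. d k * c$k) $ i" using i by simp
    qed (simp add: diagm_def)
    have "y \<bullet> (L *\<^sub>v y) = y \<bullet> (Q *\<^sub>v (diagm n d *\<^sub>v c))"
      unfolding c_def using Q D y by (subst Leq) (simp add: assoc_mult_mat_vec[of _ n n _ n])
    also have "\<dots> = (Q\<^sup>T *\<^sub>v y) \<bullet> (diagm n d *\<^sub>v c)"
      using transpose_vec_mult_scalar[OF Q _ y, of "diagm n d *\<^sub>v c"] D c by simp
    also have "\<dots> = (\<Sum>k<n. d k * (c$k)^2)" unfolding c_def[symmetric] Dc using c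
      by (simp add: scalar_prod_def lessThan_atLeast0 power2_eq_square algebra_simps)
    finally have 1: "y \<bullet> (L *\<^sub>v y) = (\<Sum>k<n. d k * (c$k)^2)" .
    have "y \<bullet> y = y \<bullet> (Q *\<^sub>v c)" using yQc by simp
    also have "\<dots> = c \<bullet> c" unfolding c_def using transpose_vec_mult_scalar[OF Q c y] c_def by simp
    also have "\<dots> = (\<Sum>k<n. (c$k)^2)" using c by (simp add: scalar_prod_def lessThan_atLeast0 power2_eq_square)
    finally show ?thesis using 1 unfolding c_def by simp
  qed
  show ?thesis using Q QQ QQ' se exp by blast
qed

lemma count_sorted:
  fixes d :: "nat \<Rightarrow> real"
  shows "card {j. j < n \<and> P (sort (map d [0..<n]) ! j)} = card {k. k < n \<and> P (d k)}"
proof -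
  let ?s = "sort (map d [0..<n])"
  have "length (filter P ?s) = length (filter P (map d [0..<n]))"
  proof -
    have "mset (filter P ?s) = mset (filter P (map d [0..<n]))" by (simp add: mset_filter)
    thus ?thesis by (metis size_mset)
  qed
  moreover have "{j. j < n \<and> P (map d [0..<n] ! j)} = {k. k < n \<and> P (d k)}" by auto
  ultimately show ?thesis by (simp add: length_filter_conv_card)
qed

lemma sorted_second:
  fixes d :: "nat \<Rightarrow> real"
  assumes n: "2 \<le> n"
    and i: "\<not> (\<exists>k1<n. \<exists>k2<n. k1 \<noteq> k2 \<and> d k1 < l \<and> d k2 < l)"
    and ii: "\<not> (\<exists>k0<n. \<forall>k<n. k \<noteq> k0 \<longrightarrow> l < d k)"
  shows "sort (map d [0..<n]) ! 1 = l"
proof -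
  let ?s = "sort (map d [0..<n])"
  have len: "length ?s = n" by simp
  have so: "sorted ?s" by simp
  have mono: "?s ! a \<le> ?s ! b" if "a \<le> b" "b < n" for a b
    using sorted_nth_mono[OF so that(1)] that len by simp
  show ?thesis
  proof (rule ccontr)
    assume ne: "?s ! 1 \<noteq> l"
    show False
    proof (cases "?s ! 1 < l")
      case True
      have "{0, 1} \<subseteq> {j. j < n \<and> ?s ! j < l}" using True mono[of 0 1] n by auto
      hence "card {0::nat, 1} \<le> card {j. j < n \<and> ?s ! j < l}" by (intro card_mono) auto
      hence "2 \<le> card {k. k < n \<and> d k < l}" using count_sorted[of n "\<lambda>x. x < l" d] by simp
      then obtain k1 where k1: "k1 \<in> {k. k < n \<and> d k < l}"
        by (metis all_not_in_conv card.empty not_numeral_le_zero)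
      have "1 \<le> card ({k. k < n \<and> d k < l} - {k1})"
        using \<open>2 \<le> card _\<close> k1 by (subst card_Diff_singleton) auto
      then obtain k2 where "k2 \<in> {k. k < n \<and> d k < l} - {k1}"
        by (metis all_not_in_conv card.empty not_one_le_zero)
      thus False using i k1 by blast
    next
      case False
      hence gt: "l < ?s ! 1" using ne by simp
      have "{j. j < n \<and> ?s ! j \<le> l} \<subseteq> {0}"
      proof
        fix j assume j: "j \<in> {j. j < n \<and> ?s ! j \<le> l}"
        show "j \<in> {0}"
        proof (rule ccontr)
          assume "j \<notin> {0}"
          hence "1 \<le> j" by simp
          hence "?s ! 1 \<le> ?s ! j" using mono j by simp
          thus False using gt j by simp
        qed
      qed
      hence "card {j. j < n \<and> ?s ! j \<le> l} \<le> card {0::nat}" by (intro card_mono) auto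
      hence c1: "card {k. k < n \<and> d k \<le> l} \<le> 1" using count_sorted[of n "\<lambda>x. x \<le> l" d] by simp
      have "\<exists>k0<n. \<forall>k<n. k \<noteq> k0 \<longrightarrow> l < d k"
      proof (cases "{k. k < n \<and> d k \<le> l} = {}")
        case True
        thus ?thesis using n by (intro exI[of _ 0]) force
      next
        case False
        then obtain k0 where k0: "k0 < n" "d k0 \<le> l" by auto
        have "\<forall>a\<in>{k. k < n \<and> d k \<le> l}. \<forall>b\<in>{k. k < n \<and> d k \<le> l}. a = b"
          using c1 by (subst card_le_Suc0_iff_eq[symmetric]) auto
        thus ?thesis using k0 by (intro exI[of _ k0]) force
      qed
      thus False using ii by blast
    qed
  qed
qed

lemma sorted_last_ident:
  fixes d :: "nat \<Rightarrow> real"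
  assumes n: "0 < n" and le: "\<And>k. k < n \<Longrightarrow> d k \<le> l" and ex: "\<exists>k<n. d k = l"
  shows "sort (map d [0..<n]) ! (n - 1) = l"
proof -
  let ?s = "sort (map d [0..<n])"
  have len: "length ?s = n" by simp
  have so: "sorted ?s" by simp
  have "?s ! (n - 1) \<in> set ?s" using n len by (intro nth_mem) simp
  hence "?s ! (n - 1) \<in> d ` {..<n}" by (simp add: lessThan_atLeast0)
  hence 1: "?s ! (n - 1) \<le> l" using le by auto
  obtain k where k: "k < n" "d k = l" using ex by blast
  hence "l \<in> set ?s" by force
  then obtain j where j: "j < n" "?s ! j = l" by (metis in_set_conv_nth len)
  have "?s ! j \<le> ?s ! (n - 1)" using sorted_nth_mono[OF so, of j "n - 1"] j len by simp
  thus ?thesis using 1 j by simp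
qed

lemma QTQ_mv: assumes Q: "Q \<in> carrier_mat n n" and QQ: "Q\<^sup>T * Q = 1\<^sub>m n" and c: "c \<in> carrier_vec n"
  shows "Q\<^sup>T *\<^sub>v (Q *\<^sub>v c) = (c :: real vec)"
  using Q c QQ by (simp add: assoc_mult_mat_vec[symmetric, of "Q\<^sup>T" n n Q n c])

lemma lmax_ident:
  fixes L :: "real mat"
  assumes L: "L \<in> carrier_mat n n" and sym: "L\<^sup>T = L" and n: "0 < n"
    and le: "\<And>y. y \<in> carrier_vec n \<Longrightarrow> y \<bullet> (L *\<^sub>v y) \<le> lm * (y \<bullet> y)"
    and x: "x \<in> carrier_vec n" "x \<noteq> 0\<^sub>v n" and xe: "x \<bullet> (L *\<^sub>v x) = lm * (x \<bullet> x)"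
  shows "sorted_eigs L ! (n - 1) = lm"
proof -
  obtain Q d where Q: "Q \<in> carrier_mat n n" "Q\<^sup>T * Q = 1\<^sub>m n" "Q * Q\<^sup>T = 1\<^sub>m n"
    and se: "sorted_eigs L = sort (map d [0..<n])"
    and exp: "\<And>y. y \<in> carrier_vec n \<Longrightarrow> y \<bullet> (L *\<^sub>v y) = (\<Sum>k<n. d k * ((Q\<^sup>T *\<^sub>v y)$k)^2) \<and>
                          y \<bullet> y = (\<Sum>k<n. ((Q\<^sup>T *\<^sub>v y)$k)^2)"
    using spec_facts[OF L sym] by blast
  have le_d: "d k \<le> lm" if k: "k < n" for k
  proof -
    define y where "y = Q *\<^sub>v unit_vec n k"
    have y: "y \<in> carrier_vec n" unfolding y_def using Q by simp
    have c: "Q\<^sup>T *\<^sub>v y = unit_vec n k" unfolding y_def by (rule QTQ_mv) (use Q in auto)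
    have uv: "(\<Sum>j<n. f j * ((unit_vec n k)$j)^2) = f k" for f :: "nat \<Rightarrow> real"
    proof -
      have "(\<Sum>j<n. f j * ((unit_vec n k)$j)^2) = (\<Sum>j<n. f j * (if j = k then 1 else 0))"
        by (intro sum.cong) (auto simp: unit_vec_def)
      also have "\<dots> = f k" by (rule sum_delta1[OF k])
      finally show ?thesis .
    qed
    have "y \<bullet> (L *\<^sub>v y) = d k" using exp[OF y] uv[of d] unfolding c by simp
    moreover have "y \<bullet> y = 1" using exp[OF y] uv[of "\<lambda>_. 1"] unfolding c by simp
    ultimately show ?thesis using le[OF y] by simp
  qed
  have ex: "\<exists>k<n. d k = lm"
  proof (rule ccontr)
    assume "\<not> ?thesis"
    hence lt: "\<And>k. k < n \<Longrightarrow> d k < lm" using le_d by force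
    define c where "c = Q\<^sup>T *\<^sub>v x"
    have "x \<bullet> x \<noteq> 0" using sp_self_zero[OF x(1)] x(2) by auto
    hence "(\<Sum>k<n. (c$k)^2) \<noteq> 0" using exp[OF x(1)] unfolding c_def by simp
    then obtain k where k: "k < n" "(c$k)^2 \<noteq> 0" by (meson lessThan_iff sum.neutral)
    have "0 = x \<bullet> (L *\<^sub>v x) - lm * (x \<bullet> x)" using xe by simp
    also have "\<dots> = (\<Sum>k<n. (d k - lm) * (c$k)^2)" using exp[OF x(1)] unfolding c_def
      by (simp add: sum_distrib_left sum_subtractf left_diff_distrib)
    also have "\<dots> = (d k - lm) * (c$k)^2 + (\<Sum>j\<in>{..<n}-{k}. (d j - lm) * (c$j)^2)"
      by (rule sum.remove) (use k in auto)
    also have "\<dots> < 0"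
    proof -
      have "(d k - lm) * (c$k)^2 < 0" using lt[OF k(1)] k(2) by (intro mult_neg_pos) auto
      moreover have "(\<Sum>j\<in>{..<n}-{k}. (d j - lm) * (c$j)^2) \<le> 0"
        using lt by (intro sum_nonpos mult_nonpos_nonneg) (auto simp: less_imp_le)
      ultimately show ?thesis by linarith
    qed
    finally show False by simp
  qed
  show ?thesis unfolding se by (rule sorted_last_ident[OF n le_d ex])
qed

lemma sum2:
  assumes "k1 \<noteq> k2" "k1 < n" "k2 < (n::nat)"
  shows "(\<Sum>k<n. (if k = k1 then A k else if k = k2 then B k else 0)) = (A k1 + B k2 :: real)"
proof -
  have "(\<Sum>k<n. (if k = k1 then A k else if k = k2 then B k else 0))
      = (\<Sum>k<n. (if k = k1 then A k else 0) + (if k = k2 then B k else 0))"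
    using assms(1) by (intro sum.cong) auto
  also have "\<dots> = A k1 + B k2" using assms by (simp add: sum.distrib sum.delta)
  finally show ?thesis .
qed

lemma sum_one_dot: "y \<in> carrier_vec n \<Longrightarrow> (\<Sum>k<n. y$k) = y \<bullet> vec n (\<lambda>_. 1::real)"
  by (simp add: scalar_prod_def lessThan_atLeast0)

lemma qf_scale:
  fixes L :: "real mat"
  assumes L: "L \<in> carrier_mat n n" and y: "y \<in> carrier_vec n"
  shows "(a \<cdot>\<^sub>v y) \<bullet> (L *\<^sub>v (a \<cdot>\<^sub>v y)) = a^2 * (y \<bullet> (L *\<^sub>v y))"
  using L y by (simp add: mult_mat_vec[of L n n] scalar_prod_smult_distrib[of _ n]
      smult_scalar_prod_distrib[of _ n] power2_eq_square)

lemma l2_ident: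
  fixes L :: "real mat"
  assumes L: "L \<in> carrier_mat n n" and sym: "L\<^sup>T = L" and n: "2 \<le> n"
    and ge: "\<And>y. y \<in> carrier_vec n \<Longrightarrow> (\<Sum>k<n. y$k) = 0 \<Longrightarrow> l2 * (y \<bullet> y) \<le> y \<bullet> (L *\<^sub>v y)"
    and inv: "\<And>y a. y \<in> carrier_vec n \<Longrightarrow>
        (y + a \<cdot>\<^sub>v vec n (\<lambda>_. 1)) \<bullet> (L *\<^sub>v (y + a \<cdot>\<^sub>v vec n (\<lambda>_. 1))) = y \<bullet> (L *\<^sub>v y)"
    and x: "x \<in> carrier_vec n" "x \<noteq> 0\<^sub>v n" "(\<Sum>k<n. x$k) = 0"
    and xe: "x \<bullet> (L *\<^sub>v x) = l2 * (x \<bullet> x)"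
    and l2: "0 \<le> l2"
  shows "sorted_eigs L ! 1 = l2"
proof -
  define one where "one = vec n (\<lambda>_. 1::real)"
  have one: "one \<in> carrier_vec n" unfolding one_def by simp
  obtain Q d where Q: "Q \<in> carrier_mat n n" "Q\<^sup>T * Q = 1\<^sub>m n" "Q * Q\<^sup>T = 1\<^sub>m n"
    and se: "sorted_eigs L = sort (map d [0..<n])"
    and exp: "\<And>y. y \<in> carrier_vec n \<Longrightarrow> y \<bullet> (L *\<^sub>v y) = (\<Sum>k<n. d k * ((Q\<^sup>T *\<^sub>v y)$k)^2) \<and>
                          y \<bullet> y = (\<Sum>k<n. ((Q\<^sup>T *\<^sub>v y)$k)^2)"
    using spec_facts[OF L sym] by blast
  define b where "b = Q\<^sup>T *\<^sub>v one"
  have b: "b \<in> carrier_vec n" unfolding b_def using Q one by simp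
  have xx: "0 < x \<bullet> x" using sp_self_zero[OF x(1)] x(2) sp_self_nonneg[of x] by force
  have i: "\<not> (\<exists>k1<n. \<exists>k2<n. k1 \<noteq> k2 \<and> d k1 < l2 \<and> d k2 < l2)"
  proof
    assume "\<exists>k1<n. \<exists>k2<n. k1 \<noteq> k2 \<and> d k1 < l2 \<and> d k2 < l2"
    then obtain k1 k2 where k: "k1 < n" "k2 < n" "k1 \<noteq> k2" "d k1 < l2" "d k2 < l2" by blast
    obtain al be where ab: "al * b$k1 + be * b$k2 = 0" "al \<noteq> 0 \<or> be \<noteq> 0"
    proof (cases "b$k1 = 0 \<and> b$k2 = 0")
      case True thus ?thesis using that[of 1 0] by simp
    next
      case False thus ?thesis using that[of "b$k2" "- b$k1"] by (auto simp: algebra_simps)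
    qed
    define c where "c = vec n (\<lambda>k. if k = k1 then al else if k = k2 then be else 0)"
    have c: "c \<in> carrier_vec n" unfolding c_def by simp
    define y where "y = Q *\<^sub>v c"
    have y: "y \<in> carrier_vec n" unfolding y_def using Q c by simp
    have cy: "Q\<^sup>T *\<^sub>v y = c" unfolding y_def by (rule QTQ_mv[OF Q(1,2) c])
    have "(\<Sum>k<n. y$k) = y \<bullet> one" using sum_one_dot[OF y] unfolding one_def .
    also have "\<dots> = one \<bullet> (Q *\<^sub>v c)" unfolding y_def using comm_scalar_prod[OF _ one, of "Q *\<^sub>v c"] Q c by simp
    also have "\<dots> = b \<bullet> c" unfolding b_def using transpose_vec_mult_scalar[OF Q(1) c one] by simp
    also have "\<dots> = (\<Sum>k<n. (if k = k1 then b$k * al else if k = k2 then b$k * be else 0))"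
      unfolding c_def using b by (simp add: scalar_prod_def lessThan_atLeast0) (intro sum.cong, auto)
    also have "\<dots> = 0" using sum2[OF k(3,1,2)] ab(1) by (simp add: algebra_simps)
    finally have sy: "(\<Sum>k<n. y$k) = 0" .
    have yLy: "y \<bullet> (L *\<^sub>v y) = al^2 * d k1 + be^2 * d k2"
    proof -
      have "y \<bullet> (L *\<^sub>v y) = (\<Sum>k<n. (if k = k1 then d k * al^2 else if k = k2 then d k * be^2 else 0))"
        using exp[OF y] unfolding cy c_def by (simp) (intro sum.cong, auto)
      thus ?thesis using sum2[OF k(3,1,2)] by (simp add: algebra_simps)
    qed
    have yy: "y \<bullet> y = al^2 + be^2"
    proof -
      have "y \<bullet> y = (\<Sum>k<n. (if k = k1 then al^2 else if k = k2 then be^2 else 0))"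
        using exp[OF y] unfolding cy c_def by (simp) (intro sum.cong, auto)
      thus ?thesis using sum2[OF k(3,1,2)] by simp
    qed
    have "l2 * (al^2 + be^2) \<le> al^2 * d k1 + be^2 * d k2" using ge[OF y sy] yLy yy by simp
    moreover have "al^2 * d k1 \<le> al^2 * l2" using k(4) by (intro mult_left_mono) auto
    moreover have "be^2 * d k2 \<le> be^2 * l2" using k(5) by (intro mult_left_mono) auto
    moreover have "al^2 * d k1 < al^2 * l2 \<or> be^2 * d k2 < be^2 * l2"
      using ab(2) k(4,5) by auto
    ultimately show False by (simp add: algebra_simps)
  qed
  have ii: "\<not> (\<exists>k0<n. \<forall>k<n. k \<noteq> k0 \<longrightarrow> l2 < d k)"
  proof
    assume "\<exists>k0<n. \<forall>k<n. k \<noteq> k0 \<longrightarrow> l2 < d k"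
    then obtain k0 where k0: "k0 < n" "\<And>k. k < n \<Longrightarrow> k \<noteq> k0 \<Longrightarrow> l2 < d k" by blast
    define g where "g = Q\<^sup>T *\<^sub>v x"
    have g: "g \<in> carrier_vec n" unfolding g_def using Q x by simp
    obtain p q where pq: "p * b$k0 + q * g$k0 = 0" "p \<noteq> 0 \<or> q \<noteq> 0"
    proof (cases "b$k0 = 0 \<and> g$k0 = 0")
      case True thus ?thesis using that[of 0 1] by simp
    next
      case False thus ?thesis using that[of "g$k0" "- b$k0"] by (auto simp: algebra_simps)
    qed
    define y where "y = q \<cdot>\<^sub>v x + p \<cdot>\<^sub>v one"
    have y: "y \<in> carrier_vec n" unfolding y_def using x one by simp
    define c where "c = Q\<^sup>T *\<^sub>v y"
    have c: "c = q \<cdot>\<^sub>v g + p \<cdot>\<^sub>v b" unfolding c_def y_def g_def b_def using Q x one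
      by (simp add: mult_add_distrib_mat_vec[of _ n n] mult_mat_vec[of _ n n])
    have ck0: "c$k0 = 0" unfolding c using pq(1) k0(1) g b by (simp add: algebra_simps)
    have ox: "one \<bullet> x = 0" using sum_one_dot[OF x(1)] x(3) comm_scalar_prod[OF x(1) one] unfolding one_def by simp
    have oo: "one \<bullet> one = real n" unfolding one_def by (simp add: scalar_prod_def)
    have yy: "y \<bullet> y = q^2 * (x \<bullet> x) + p^2 * real n"
    proof -
      have "y \<bullet> y = q * q * (x \<bullet> x) + q * p * (x \<bullet> one) + p * q * (one \<bullet> x) + p * p * (one \<bullet> one)"
        unfolding y_def using x(1) one
        by (simp add: scalar_prod_add_distrib[of _ n] add_scalar_prod_distrib[of _ n]
            scalar_prod_smult_distrib[of _ n] smult_scalar_prod_distrib[of _ n] algebra_simps)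
      also have "x \<bullet> one = 0" using ox comm_scalar_prod[OF x(1) one] by simp
      finally show ?thesis using ox oo by (simp add: power2_eq_square)
    qed
    have yLy: "y \<bullet> (L *\<^sub>v y) = q^2 * (l2 * (x \<bullet> x))"
      unfolding y_def one_def using inv[of "q \<cdot>\<^sub>v x" p] x(1) qf_scale[OF L x(1), of q] xe by simp
    have "0 < y \<bullet> y"
    proof -
      have A: "0 \<le> q^2 * (x \<bullet> x)" using xx by simp
      have B: "0 \<le> p^2 * real n" by simp
      have "0 < q^2 * (x \<bullet> x) \<or> 0 < p^2 * real n" using pq(2) xx n by auto
      thus ?thesis unfolding yy using A B by linarith
    qed
    hence "(\<Sum>k<n. (c$k)^2) \<noteq> 0" using exp[OF y] unfolding c_def by simp
    then obtain k where k: "k < n" "(c$k)^2 \<noteq> 0" by (meson lessThan_iff sum.neutral)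
    have kk0: "k \<noteq> k0" using k(2) ck0 by auto
    have "y \<bullet> (L *\<^sub>v y) - l2 * (y \<bullet> y) = (\<Sum>j<n. (d j - l2) * (c$j)^2)" using exp[OF y] unfolding c_def
      by (simp add: sum_distrib_left sum_subtractf left_diff_distrib)
    also have "\<dots> = (d k - l2) * (c$k)^2 + (\<Sum>j\<in>{..<n}-{k}. (d j - l2) * (c$j)^2)"
      by (rule sum.remove) (use k in auto)
    also have "\<dots> > 0"
    proof -
      have "(d k - l2) * (c$k)^2 > 0" using k0(2)[OF k(1) kk0] k(2) by (intro mult_pos_pos) auto
      moreover have "(\<Sum>j\<in>{..<n}-{k}. (d j - l2) * (c$j)^2) \<ge> 0"
      proof (intro sum_nonneg)
        fix j assume "j \<in> {..<n}-{k}"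
        thus "(d j - l2) * (c$j)^2 \<ge> 0" using k0(2)[of j] ck0 by (cases "j = k0") auto
      qed
      ultimately show ?thesis by linarith
    qed
    finally have "0 < y \<bullet> (L *\<^sub>v y) - l2 * (y \<bullet> y)" .
    moreover have "y \<bullet> (L *\<^sub>v y) - l2 * (y \<bullet> y) = - (l2 * p^2 * real n)"
      unfolding yLy yy by (simp add: algebra_simps)
    moreover have "0 \<le> l2 * p^2 * real n" using l2 by simp
    ultimately show False by linarith
  qed
  show ?thesis unfolding se by (rule sorted_second[OF n i ii])
qed

lemma gram_qf:
  fixes u :: "nat \<Rightarrow> real vec"
  assumes u: "\<And>i. i < n \<Longrightarrow> u i \<in> carrier_vec m"
  shows "(\<Sum>i<n. \<Sum>j<n. z i * (u i \<bullet> u j) * z j) = (\<Sum>r<m. (\<Sum>i<n. z i * u i $ r)^2)"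
proof -
  have "(\<Sum>i<n. \<Sum>j<n. z i * (u i \<bullet> u j) * z j) = (\<Sum>i<n. \<Sum>j<n. \<Sum>r<m. z i * u i $ r * (z j * u j $ r))"
  proof (intro sum.cong refl)
    fix i j assume "i \<in> {..<n}" "j \<in> {..<n}"
    hence "u i \<in> carrier_vec m" "u j \<in> carrier_vec m" using u by auto
    thus "z i * (u i \<bullet> u j) * z j = (\<Sum>r<m. z i * u i $ r * (z j * u j $ r))"
      by (simp add: scalar_prod_def lessThan_atLeast0 sum_distrib_left sum_distrib_right algebra_simps)
  qed
  also have "\<dots> = (\<Sum>i<n. \<Sum>r<m. \<Sum>j<n. z i * u i $ r * (z j * u j $ r))"
    by (rule sum.cong[OF refl], rule sum.swap)
  also have "\<dots> = (\<Sum>r<m. \<Sum>i<n. \<Sum>j<n. z i * u i $ r * (z j * u j $ r))" by (rule sum.swap)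
  also have "\<dots> = (\<Sum>r<m. (\<Sum>i<n. z i * u i $ r)^2)"
    by (simp add: power2_eq_square sum_product)
  finally show ?thesis .
qed

lemma gram_mix:
  fixes u1 u2 :: "nat \<Rightarrow> real vec"
  assumes u1: "\<And>k. k < n \<Longrightarrow> u1 k \<in> carrier_vec n" and u2: "\<And>k. k < n \<Longrightarrow> u2 k \<in> carrier_vec n"
    and t: "0 \<le> t" "t \<le> 1"
  shows "\<exists>u. (\<forall>k<n. u k \<in> carrier_vec n) \<and>
     (\<forall>i<n. \<forall>j<n. u i \<bullet> u j = t * (u1 i \<bullet> u1 j) + (1 - t) * (u2 i \<bullet> u2 j))"
proof -
  define X where "X = mat n n (\<lambda>(i,j). t * (u1 i \<bullet> u1 j) + (1 - t) * (u2 i \<bullet> u2 j))"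
  have X: "X \<in> carrier_mat n n" unfolding X_def by simp
  have XT: "X\<^sup>T = X" unfolding X_def using u1 u2
    by (intro eq_matI) (auto simp: comm_scalar_prod[of _ n])
  have psd: "0 \<le> y \<bullet> (X *\<^sub>v y)" if y: "y \<in> carrier_vec n" for y
  proof -
    have "y \<bullet> (X *\<^sub>v y) = (\<Sum>i<n. \<Sum>j<n. y$i * X $$ (i,j) * y$j)" by (rule qf_mat[OF X y])
    also have "\<dots> = (\<Sum>i<n. \<Sum>j<n. t * (y$i * (u1 i \<bullet> u1 j) * y$j) + (1 - t) * (y$i * (u2 i \<bullet> u2 j) * y$j))"
      unfolding X_def by (intro sum.cong refl) (simp add: algebra_simps)
    also have "\<dots> = t * (\<Sum>i<n. \<Sum>j<n. y$i * (u1 i \<bullet> u1 j) * y$j) + (1 - t) * (\<Sum>i<n. \<Sum>j<n. y$i * (u2 i \<bullet> u2 j) * y$j)"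
      by (simp add: sum_distrib_left sum.distrib)
    also have "\<dots> = t * (\<Sum>r<n. (\<Sum>i<n. y$i * u1 i $ r)^2) + (1 - t) * (\<Sum>r<n. (\<Sum>i<n. y$i * u2 i $ r)^2)"
      using gram_qf[of n u1 n "\<lambda>i. y$i"] gram_qf[of n u2 n "\<lambda>i. y$i"] u1 u2 by simp
    also have "\<dots> \<ge> 0" using t by (intro add_nonneg_nonneg mult_nonneg_nonneg sum_nonneg) auto
    finally show ?thesis .
  qed
  obtain Q d where Q: "Q \<in> carrier_mat n n" and QQ: "Q\<^sup>T * Q = 1\<^sub>m n" and QXQ: "Q\<^sup>T * X * Q = diagm n d"
    using spectral[OF X XT] by blast
  have QT: "Q\<^sup>T \<in> carrier_mat n n" using Q by simp
  have QQ': "Q * Q\<^sup>T = 1\<^sub>m n" by (rule mat_mult_left_right_inverse[OF QT Q QQ])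
  have D: "diagm n d \<in> carrier_mat n n" unfolding diagm_def by simp
  have Xeq: "X = Q * diagm n d * Q\<^sup>T"
  proof -
    have "Q * diagm n d * Q\<^sup>T = Q * (Q\<^sup>T * X * Q) * Q\<^sup>T" unfolding QXQ ..
    also have "\<dots> = (Q * Q\<^sup>T) * X * (Q * Q\<^sup>T)" using Q X
      by (simp add: assoc_mult_mat[of _ n n _ n _ n])
    also have "\<dots> = X" unfolding QQ' using X by simp
    finally show ?thesis by simp
  qed
  have dpos: "0 \<le> d k" if k: "k < n" for k
  proof -
    define e where "e = (unit_vec n k :: real vec)"
    have e: "e \<in> carrier_vec n" unfolding e_def by simp
    have "diagm n d *\<^sub>v e = Q\<^sup>T *\<^sub>v (X *\<^sub>v (Q *\<^sub>v e))"
      unfolding QXQ[symmetric] using Q X e by (simp add: assoc_mult_mat_vec[of _ n n _ n])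
    hence "e \<bullet> (diagm n d *\<^sub>v e) = e \<bullet> (Q\<^sup>T *\<^sub>v (X *\<^sub>v (Q *\<^sub>v e)))" by simp
    also have "\<dots> = (Q *\<^sub>v e) \<bullet> (X *\<^sub>v (Q *\<^sub>v e))"
      using transpose_vec_mult_scalar[of "Q\<^sup>T" n n "X *\<^sub>v (Q *\<^sub>v e)" e] Q X e by simp
    also have "\<dots> \<ge> 0" by (rule psd) (use Q e in simp)
    finally have "0 \<le> e \<bullet> (diagm n d *\<^sub>v e)" .
    moreover have "e \<bullet> (diagm n d *\<^sub>v e) = d k"
    proof -
      have "diagm n d *\<^sub>v e = d k \<cdot>\<^sub>v e"
        unfolding e_def diagm_def using k
        by (intro eq_vecI) (auto simp: index_mult_mat_vec scalar_prod_right_unit)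
      thus ?thesis using e k unfolding e_def by (simp add: scalar_prod_right_unit)
    qed
    ultimately show ?thesis by simp
  qed
  define u where "u = (\<lambda>k. vec n (\<lambda>r. Q $$ (k, r) * sqrt (d r)))"
  have uc: "\<forall>k<n. u k \<in> carrier_vec n" unfolding u_def by simp
  have Xent: "X $$ (i,j) = (\<Sum>r<n. Q $$ (i,r) * d r * Q $$ (j,r))" if ij: "i < n" "j < n" for i j
  proof -
    have DQ: "(\<Sum>l = 0..<n. diagm n d $$ (r, l) * Q $$ (j, l)) = d r * Q $$ (j, r)" if r: "r < n" for r
    proof -
      have "(\<Sum>l = 0..<n. diagm n d $$ (r, l) * Q $$ (j, l)) = (\<Sum>l<n. (d r * Q $$ (j, l)) * (if l = r then 1 else 0))"
        unfolding lessThan_atLeast0 using r by (intro sum.cong) (auto simp: diagm_def)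
      also have "\<dots> = d r * Q $$ (j, r)" using sum_delta1[OF r, of "\<lambda>l. d r * Q $$ (j, l)"] by simp
      finally show ?thesis .
    qed
    have "X $$ (i,j) = (Q * diagm n d * Q\<^sup>T) $$ (i,j)" using Xeq by simp
    also have "\<dots> = (\<Sum>r = 0..<n. Q $$ (i, r) * (\<Sum>l = 0..<n. diagm n d $$ (r, l) * Q $$ (j, l)))"
      using Q D ij by (simp add: scalar_prod_def row_def col_def)
    also have "\<dots> = (\<Sum>r<n. Q $$ (i,r) * d r * Q $$ (j,r))"
      unfolding lessThan_atLeast0 by (intro sum.cong refl) (simp add: DQ)
    finally show ?thesis .
  qed
  have "u i \<bullet> u j = t * (u1 i \<bullet> u1 j) + (1 - t) * (u2 i \<bullet> u2 j)" if ij: "i < n" "j < n" for i j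
  proof -
    have "u i \<bullet> u j = (\<Sum>r<n. Q $$ (i,r) * d r * Q $$ (j,r))"
      unfolding u_def using dpos
      by (simp add: scalar_prod_def lessThan_atLeast0) (intro sum.cong, auto simp: algebra_simps real_sqrt_mult[symmetric])
    also have "\<dots> = X $$ (i,j)" using Xent[OF ij] by simp
    also have "\<dots> = t * (u1 i \<bullet> u1 j) + (1 - t) * (u2 i \<bullet> u2 j)" unfolding X_def using ij by simp
    finally show ?thesis .
  qed
  thus ?thesis using uc by blast
qed

lemma hb_ext:
  fixes p :: "(nat \<Rightarrow> real) \<Rightarrow> real"
  assumes sub: "\<And>x y. p (\<lambda>i. x i + y i) \<le> p x + p y"
    and hom: "\<And>s x. 0 < s \<Longrightarrow> p (\<lambda>i. s * x i) = s * p x"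
    and p0: "0 \<le> p (\<lambda>_. 0)"
  shows "\<exists>l. \<forall>x. (\<forall>i\<ge>k. x i = 0) \<longrightarrow> (\<Sum>i<k. l i * x i) \<le> p x"
proof (induction k)
  case 0
  show ?case
  proof (intro exI allI impI)
    fix x :: "nat \<Rightarrow> real" assume "\<forall>i\<ge>0. x i = 0"
    hence "x = (\<lambda>_. 0)" by auto
    thus "(\<Sum>i<0. (\<lambda>_. 0) i * x i) \<le> p x" using p0 by simp
  qed
next
  case (Suc k)
  then obtain l where l: "\<And>x. (\<forall>i\<ge>k. x i = 0) \<Longrightarrow> (\<Sum>i<k. l i * x i) \<le> p x" by blast
  define e :: "nat \<Rightarrow> real" where "e = (\<lambda>i. if i = k then 1 else 0)"
  define W where "W = {w :: nat \<Rightarrow> real. \<forall>i\<ge>k. w i = 0}"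
  define L where "L = (\<lambda>w :: nat \<Rightarrow> real. \<Sum>i<k. l i * w i)"
  define S where "S = (\<lambda>w. L w - p (\<lambda>i. w i - e i)) ` W"
  define T where "T = (\<lambda>w. p (\<lambda>i. w i + e i) - L w) ` W"
  have Ladd: "L (\<lambda>i. w i + w' i) = L w + L w'" for w w'
    unfolding L_def by (simp add: algebra_simps sum.distrib)
  have Lsc: "L (\<lambda>i. c * w i) = c * L w" for c w
    unfolding L_def by (simp add: algebra_simps sum_distrib_left)
  have ST: "s \<le> t" if sS: "s \<in> S" and tT: "t \<in> T" for s t
  proof -
    obtain w w' where w: "w \<in> W" "w' \<in> W" and s: "s = L w - p (\<lambda>i. w i - e i)"
      and t: "t = p (\<lambda>i. w' i + e i) - L w'"
      using sS tT unfolding S_def T_def by auto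
    have "L (\<lambda>i. w i + w' i) \<le> p (\<lambda>i. w i + w' i)"
      using l[of "\<lambda>i. w i + w' i"] w unfolding L_def W_def by auto
    also have "p (\<lambda>i. w i + w' i) = p (\<lambda>i. (w i - e i) + (w' i + e i))" by simp
    also have "\<dots> \<le> p (\<lambda>i. w i - e i) + p (\<lambda>i. w' i + e i)" by (rule sub)
    finally show ?thesis unfolding s t Ladd by simp
  qed
  have zW: "(\<lambda>_. 0) \<in> W" unfolding W_def by simp
  hence Sne: "S \<noteq> {}" and Tne: "T \<noteq> {}" unfolding S_def T_def by auto
  define g where "g = Sup S"
  have Sbdd: "bdd_above S" using ST Tne unfolding bdd_above_def by blast
  have Sg: "s \<le> g" if "s \<in> S" for s using cSup_upper[OF that Sbdd] g_def by simp
  have gT: "g \<le> t" if "t \<in> T" for t unfolding g_def using ST that Sne by (intro cSup_least) auto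
  show ?case
  proof (intro exI[of _ "l(k := g)"] allI impI)
    fix x :: "nat \<Rightarrow> real" assume x: "\<forall>i\<ge>Suc k. x i = 0"
    define w where "w = x(k := 0)"
    have wW: "w \<in> W" unfolding w_def W_def using x by auto
    have xw: "x i = w i + x k * e i" for i unfolding w_def e_def by auto
    have sumx: "(\<Sum>i<Suc k. (l(k := g)) i * x i) = L w + g * x k"
    proof -
      have "(\<Sum>i<Suc k. (l(k := g)) i * x i) = (\<Sum>i<k. (l(k := g)) i * x i) + g * x k" by simp
      also have "(\<Sum>i<k. (l(k := g)) i * x i) = L w" unfolding L_def w_def by (intro sum.cong) auto
      finally show ?thesis .
    qed
    show "(\<Sum>i<Suc k. (l(k := g)) i * x i) \<le> p x"
    proof (cases "x k = 0")
      case True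
      hence "x = w" unfolding w_def by auto
      moreover have "(\<Sum>i<Suc k. (l(k := g)) i * x i) = L w" using sumx True by simp
      ultimately show ?thesis using l[of w] wW unfolding W_def L_def by auto
    next
      case False
      show ?thesis
      proof (cases "x k > 0")
        case True
        define s where "s = x k"
        define w' where "w' = (\<lambda>i. w i / s)"
        have "w' \<in> W" using wW unfolding w'_def W_def by auto
        hence "p (\<lambda>i. w' i + e i) - L w' \<in> T" unfolding T_def by auto
        hence "g \<le> p (\<lambda>i. w' i + e i) - L w'" by (rule gT)
        hence "s * g \<le> s * p (\<lambda>i. w' i + e i) - s * L w'" using True unfolding s_def
          by (simp add: right_diff_distrib[symmetric])
        also have "s * p (\<lambda>i. w' i + e i) = p (\<lambda>i. s * (w' i + e i))" using hom True s_def by simp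
        also have "(\<lambda>i. s * (w' i + e i)) = x" using True
          by (intro ext) (subst xw, simp add: w'_def s_def algebra_simps)
        also have "s * L w' = L w" using Lsc[of s w'] True unfolding w'_def s_def by simp
        finally show ?thesis unfolding sumx s_def by (simp add: mult.commute)
      next
        case False2: False
        hence neg: "x k < 0" using False by simp
        define r where "r = - x k"
        have r: "r > 0" using neg unfolding r_def by simp
        define w' where "w' = (\<lambda>i. w i / r)"
        have "w' \<in> W" using wW unfolding w'_def W_def by auto
        hence "L w' - p (\<lambda>i. w' i - e i) \<in> S" unfolding S_def by auto
        hence "L w' - p (\<lambda>i. w' i - e i) \<le> g" by (rule Sg)
        hence "r * L w' - r * p (\<lambda>i. w' i - e i) \<le> r * g" using r
          by (simp add: right_diff_distrib[symmetric])
        also have "r * L w' = L w" using Lsc[of r w'] r unfolding w'_def by simp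
        also have "r * p (\<lambda>i. w' i - e i) = p (\<lambda>i. r * (w' i - e i))" using hom r by simp
        also have "(\<lambda>i. r * (w' i - e i)) = x" using r
          by (intro ext) (subst xw, simp add: w'_def r_def algebra_simps)
        finally show ?thesis unfolding sumx r_def by (simp add: algebra_simps)
      qed
    qed
  qed
qed

definition mx :: "nat \<Rightarrow> (nat \<Rightarrow> real) \<Rightarrow> real" where
  "mx N x = Max (x ` {..<N})"

lemma mx_ge: "j < N \<Longrightarrow> x j \<le> mx N x"
  unfolding mx_def by (rule Max_ge) auto

lemma mx_in: "0 < N \<Longrightarrow> \<exists>j<N. mx N x = x j"
proof -
  assume N: "0 < N"
  have "mx N x \<in> x ` {..<N}" unfolding mx_def using N by (intro Max_in) auto
  thus ?thesis by auto
qed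

lemma mx_le: "0 < N \<Longrightarrow> (\<And>j. j < N \<Longrightarrow> x j \<le> c) \<Longrightarrow> mx N x \<le> c"
  using mx_in by metis

lemma mx_mono: "0 < N \<Longrightarrow> (\<And>j. j < N \<Longrightarrow> x j \<le> y j) \<Longrightarrow> mx N x \<le> mx N y"
  by (rule mx_le) (auto intro: order_trans[OF _ mx_ge])

lemma mx_add: "0 < N \<Longrightarrow> mx N (\<lambda>i. x i + y i) \<le> mx N x + mx N y"
  by (rule mx_le) (auto intro: add_mono mx_ge)

lemma mx_scale: assumes N: "0 < N" and s: "0 < s" shows "mx N (\<lambda>i. s * x i) = s * mx N x"
proof (rule antisym)
  show "mx N (\<lambda>i. s * x i) \<le> s * mx N x"
    using N s by (intro mx_le) (auto intro: mx_ge)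
  obtain j where j: "j < N" "mx N x = x j" using mx_in[OF N] by blast
  show "s * mx N x \<le> mx N (\<lambda>i. s * x i)" using j mx_ge[of j N "\<lambda>i. s * x i"] by simp
qed

lemma minimax_fin:
  fixes G :: "'k \<Rightarrow> nat \<Rightarrow> real"
  assumes N: "0 < N"
    and mix: "\<And>k1 k2 t. k1 \<in> K \<Longrightarrow> k2 \<in> K \<Longrightarrow> 0 \<le> t \<Longrightarrow> t \<le> 1 \<Longrightarrow>
        \<exists>k\<in>K. \<forall>i<N. t * G k1 i + (1 - t) * G k2 i \<le> G k i"
    and bnd: "\<And>k. k \<in> K \<Longrightarrow> \<exists>i<N. G k i \<le> a"
  shows "\<exists>l. (\<forall>i<N. 0 \<le> l i) \<and> (\<Sum>i<N. l i) = 1 \<and> (\<forall>k\<in>K. (\<Sum>i<N. l i * G k i) \<le> a)"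
proof (cases "K = {}")
  case True
  show ?thesis
    by (rule exI[of _ "\<lambda>i. if i = 0 then 1 else 0"]) (use True N in \<open>auto simp: sum.delta\<close>)
next
  case False
  then obtain k0 where k0: "k0 \<in> K" by blast
  define S where "S = (\<lambda>x. {mx N (\<lambda>i. x i - t * G k i) + t * a | t k. 0 \<le> t \<and> k \<in> K})"
  define p where "p = (\<lambda>x. Inf (S x))"
  have Sne: "S x \<noteq> {}" for x unfolding S_def using k0 by blast
  have Slow: "- (\<Sum>i<N. \<bar>x i\<bar>) \<le> v" if vS: "v \<in> S x" for x v
  proof -
    obtain t k where tk: "0 \<le> t" "k \<in> K" "v = mx N (\<lambda>i. x i - t * G k i) + t * a"
      using vS unfolding S_def by blast
    obtain j where j: "j < N" "G k j \<le> a" using bnd[OF tk(2)] by blast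
    have "x j - t * G k j \<le> mx N (\<lambda>i. x i - t * G k i)" using mx_ge[OF j(1), of "\<lambda>i. x i - t * G k i"] by simp
    moreover have "t * G k j \<le> t * a" using tk(1) j(2) by (simp add: mult_left_mono)
    moreover have "\<bar>x j\<bar> \<le> (\<Sum>i<N. \<bar>x i\<bar>)" using j(1) by (intro member_le_sum) auto
    ultimately show ?thesis using tk(3) by linarith
  qed
  have Sbdd: "bdd_below (S x)" for x using Slow unfolding bdd_below_def by blast
  have ple: "p x \<le> v" if "v \<in> S x" for x v unfolding p_def using that Sbdd by (rule cInf_lower)
  have pge: "c \<le> p x" if "\<And>v. v \<in> S x \<Longrightarrow> c \<le> v" for x c
    unfolding p_def using Sne that by (rule cInf_greatest)
  have sub: "p (\<lambda>i. x i + y i) \<le> p x + p y" for x y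
  proof -
    have key: "p (\<lambda>i. x i + y i) \<le> v1 + v2" if v1: "v1 \<in> S x" and v2: "v2 \<in> S y" for v1 v2
    proof -
      obtain t1 k1 where 1: "0 \<le> t1" "k1 \<in> K" "v1 = mx N (\<lambda>i. x i - t1 * G k1 i) + t1 * a"
        using v1 unfolding S_def by blast
      obtain t2 k2 where 2: "0 \<le> t2" "k2 \<in> K" "v2 = mx N (\<lambda>i. y i - t2 * G k2 i) + t2 * a"
        using v2 unfolding S_def by blast
      show ?thesis
      proof (cases "t1 + t2 = 0")
        case True
        hence t0: "t1 = 0" "t2 = 0" using 1 2 by auto
        have "mx N (\<lambda>i. x i + y i - 0 * G k1 i) + 0 * a \<in> S (\<lambda>i. x i + y i)"
          unfolding S_def using 1 by blast
        hence "p (\<lambda>i. x i + y i) \<le> mx N (\<lambda>i. x i + y i)" using ple by fastforce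
        also have "\<dots> \<le> mx N x + mx N y" by (rule mx_add[OF N])
        finally show ?thesis using 1 2 t0 by simp
      next
        case False
        define T where "T = t1 + t2"
        have T: "0 < T" using False 1 2 unfolding T_def by simp
        define tau where "tau = t1 / T"
        have tau: "0 \<le> tau" "tau \<le> 1" using 1 2 T unfolding tau_def T_def by auto
        obtain k where k: "k \<in> K" "\<forall>i<N. tau * G k1 i + (1 - tau) * G k2 i \<le> G k i"
          using mix[OF 1(2) 2(2) tau] by blast
        have "mx N (\<lambda>i. x i + y i - T * G k i) + T * a \<in> S (\<lambda>i. x i + y i)"
          unfolding S_def using k(1) T by force
        hence "p (\<lambda>i. x i + y i) \<le> mx N (\<lambda>i. x i + y i - T * G k i) + T * a" by (rule ple)
        also have "mx N (\<lambda>i. x i + y i - T * G k i) \<le> mx N (\<lambda>i. (x i - t1 * G k1 i) + (y i - t2 * G k2 i))"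
        proof (rule mx_mono[OF N])
          fix j assume j: "j < N"
          have "T * (tau * G k1 j + (1 - tau) * G k2 j) \<le> T * G k j"
            using k(2) j T by (intro mult_left_mono) auto
          moreover have "T * (tau * G k1 j + (1 - tau) * G k2 j) = t1 * G k1 j + t2 * G k2 j"
          proof -
            have a: "T * tau = t1" using T unfolding tau_def by simp
            have b: "T * (1 - tau) = t2" using a unfolding T_def by (simp add: right_diff_distrib)
            have "T * (tau * G k1 j + (1 - tau) * G k2 j) = (T * tau) * G k1 j + (T * (1 - tau)) * G k2 j"
              by (simp only: distrib_left mult.assoc)
            thus ?thesis unfolding a b .
          qed
          ultimately show "x j + y j - T * G k j \<le> (x j - t1 * G k1 j) + (y j - t2 * G k2 j)" by simp
        qed
        also have "\<dots> \<le> mx N (\<lambda>i. x i - t1 * G k1 i) + mx N (\<lambda>i. y i - t2 * G k2 i)"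
          by (rule mx_add[OF N])
        finally show ?thesis using 1 2 unfolding T_def by (simp add: algebra_simps)
      qed
    qed
    have "p (\<lambda>i. x i + y i) - v2 \<le> p x" if v2: "v2 \<in> S y" for v2
      by (rule pge) (use key v2 in force)
    hence "p (\<lambda>i. x i + y i) - p x \<le> p y" by (intro pge) force
    thus ?thesis by simp
  qed
  have hom: "p (\<lambda>i. s * x i) = s * p x" if s: "0 < s" for s x
  proof (rule antisym)
    have "p (\<lambda>i. s * x i) / s \<le> p x"
    proof (rule pge)
      fix v assume "v \<in> S x"
      then obtain t k where tk: "0 \<le> t" "k \<in> K" "v = mx N (\<lambda>i. x i - t * G k i) + t * a"
        unfolding S_def by blast
      have "mx N (\<lambda>i. s * x i - (s * t) * G k i) + (s * t) * a \<in> S (\<lambda>i. s * x i)"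
        unfolding S_def using tk s by (intro CollectI exI[of _ "s * t"] exI[of _ k]) auto
      hence "p (\<lambda>i. s * x i) \<le> mx N (\<lambda>i. s * x i - (s * t) * G k i) + (s * t) * a" by (rule ple)
      also have "mx N (\<lambda>i. s * x i - (s * t) * G k i) = s * mx N (\<lambda>i. x i - t * G k i)"
        using mx_scale[OF N s, of "\<lambda>i. x i - t * G k i"] by (simp add: algebra_simps)
      finally show "p (\<lambda>i. s * x i) / s \<le> v" using s tk(3) by (simp add: field_simps)
    qed
    thus "p (\<lambda>i. s * x i) \<le> s * p x" using s by (simp add: field_simps)
    show "s * p x \<le> p (\<lambda>i. s * x i)"
    proof (rule pge)
      fix v assume "v \<in> S (\<lambda>i. s * x i)"
      then obtain t k where tk: "0 \<le> t" "k \<in> K" "v = mx N (\<lambda>i. s * x i - t * G k i) + t * a"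
        unfolding S_def by blast
      have "mx N (\<lambda>i. x i - (t / s) * G k i) + (t / s) * a \<in> S x"
        unfolding S_def using tk s by (intro CollectI exI[of _ "t / s"] exI[of _ k]) auto
      hence "p x \<le> mx N (\<lambda>i. x i - (t / s) * G k i) + (t / s) * a" by (rule ple)
      hence "s * p x \<le> s * mx N (\<lambda>i. x i - (t / s) * G k i) + t * a" using s
        by (simp add: field_simps mult_left_mono)
      also have "s * mx N (\<lambda>i. x i - (t / s) * G k i) = mx N (\<lambda>i. s * x i - t * G k i)"
        using mx_scale[OF N s, of "\<lambda>i. x i - (t / s) * G k i"] s by (simp add: algebra_simps)
      finally show "s * p x \<le> v" using tk(3) by simp
    qed
  qed
  have p0: "0 \<le> p (\<lambda>_. 0)"
  proof (rule pge)
    fix v assume "v \<in> S (\<lambda>_. 0)"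
    then obtain t k where tk: "0 \<le> t" "k \<in> K" "v = mx N (\<lambda>i. 0 - t * G k i) + t * a"
      unfolding S_def by blast
    obtain j where j: "j < N" "G k j \<le> a" using bnd[OF tk(2)] by blast
    have "0 - t * G k j \<le> mx N (\<lambda>i. 0 - t * G k i)" by (rule mx_ge[OF j(1)])
    moreover have "t * G k j \<le> t * a" using tk(1) j(2) by (simp add: mult_left_mono)
    ultimately show "0 \<le> v" using tk(3) by linarith
  qed
  obtain l where l: "\<And>x. (\<forall>i\<ge>N. x i = 0) \<Longrightarrow> (\<Sum>i<N. l i * x i) \<le> p x"
    using hb_ext[of p N, OF sub hom p0] by blast
  have pmx: "p x \<le> mx N x" for x
  proof -
    have "mx N (\<lambda>i. x i - 0 * G k0 i) + 0 * a \<in> S x" unfolding S_def using k0 by blast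
    thus ?thesis using ple by fastforce
  qed
  show ?thesis
  proof (intro exI[of _ l] conjI allI impI ballI)
    fix j assume j: "j < N"
    define x :: "nat \<Rightarrow> real" where "x = (\<lambda>i. if i = j then -1 else 0)"
    have "(\<Sum>i<N. l i * x i) = - l j" unfolding x_def using j by (simp add: if_distrib sum.delta cong: if_cong)
    moreover have "(\<Sum>i<N. l i * x i) \<le> p x" using j by (intro l) (auto simp: x_def)
    moreover have "mx N x \<le> 0" using N by (intro mx_le) (auto simp: x_def)
    ultimately show "0 \<le> l j" using pmx[of x] by linarith
  next
    define x :: "nat \<Rightarrow> real" where "x = (\<lambda>i. if i < N then 1 else 0)"
    define y :: "nat \<Rightarrow> real" where "y = (\<lambda>i. if i < N then -1 else 0)"
    have "(\<Sum>i<N. l i) \<le> p x" using l[of x] by (simp add: x_def)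
    moreover have "mx N x \<le> 1" using N by (intro mx_le) (auto simp: x_def)
    moreover have "- (\<Sum>i<N. l i) \<le> p y" using l[of y] by (simp add: y_def sum_negf)
    moreover have "mx N y \<le> -1" using N by (intro mx_le) (auto simp: y_def)
    ultimately show "(\<Sum>i<N. l i) = 1" using pmx[of x] pmx[of y] by linarith
  next
    fix k assume k: "k \<in> K"
    define x :: "nat \<Rightarrow> real" where "x = (\<lambda>i. if i < N then G k i else 0)"
    have "(\<Sum>i<N. l i * G k i) = (\<Sum>i<N. l i * x i)" unfolding x_def by simp
    also have "\<dots> \<le> p x" by (intro l) (auto simp: x_def)
    also have "p x \<le> mx N (\<lambda>i. x i - 1 * G k i) + 1 * a"
      by (rule ple) (unfold S_def, use k in \<open>intro CollectI exI[of _ "1::real"] exI[of _ k], auto\<close>)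
    also have "mx N (\<lambda>i. x i - 1 * G k i) \<le> 0" using N by (intro mx_le) (auto simp: x_def)
    finally show "(\<Sum>i<N. l i * G k i) \<le> a" by simp
  qed
qed

definition embK :: "nat \<Rightarrow> ((nat \<Rightarrow> real vec) \<times> (nat \<Rightarrow> real vec)) set" where
  "embK N = {(u,v). (\<forall>i<2*N. u i \<in> carrier_vec (2*N) \<and> v i \<in> carrier_vec (2*N)) \<and>
     (\<Sum>i<2*N. sqn (u i)) = 1 \<and> (\<Sum>i<2*N. sqn (v i)) = 1 \<and> (\<forall>k<2*N. (\<Sum>i<2*N. u i $ k) = 0)}"

definition Phi :: "nat \<Rightarrow> (nat \<Rightarrow> real vec) \<Rightarrow> (nat \<Rightarrow> real vec) \<Rightarrow> nat \<Rightarrow> real" where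
  "Phi N u v i = sqn (v i - v (N+i)) - sqn (u i - u (N+i))"

definition phi0 :: "(nat \<times> nat) set \<Rightarrow> (nat \<Rightarrow> real vec) \<Rightarrow> (nat \<Rightarrow> real vec) \<Rightarrow> real" where
  "phi0 E u v = (\<Sum>(i,j)\<in>E. sqn (v i - v j)) - (\<Sum>(i,j)\<in>E. sqn (u i - u j))"

lemma E3_iff: "(\<forall>(i,j)\<in>E3 N. P i j) \<longleftrightarrow> (\<forall>i<N. P i (N+i))"
  unfolding E3_def by auto

lemma emb_feasible_iff:
  "emb_feasible N xi u v \<longleftrightarrow> (u,v) \<in> embK N \<and> (\<forall>i<N. xi \<le> Phi N u v i)"
  unfolding emb_feasible_def embK_def Phi_def E3_iff by auto

lemma emb_obj_eq: "emb_obj N E c xi u v = c * xi + phi0 E u v"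
  unfolding emb_obj_def phi0_def by simp

lemma sqn_diff: "a \<in> carrier_vec n \<Longrightarrow> b \<in> carrier_vec n \<Longrightarrow> sqn (a - b) = a \<bullet> a + b \<bullet> b - 2 * (a \<bullet> b)"
  unfolding sqn_def
  by (simp add: minus_scalar_prod_distrib[of _ n] scalar_prod_minus_distrib[of _ n] comm_scalar_prod[of b n a])

lemma colsum_gram:
  assumes u: "\<And>i. i < n \<Longrightarrow> u i \<in> carrier_vec n"
  shows "(\<forall>k<n. (\<Sum>i<n. u i $ k) = (0::real)) \<longleftrightarrow> (\<Sum>i<n. \<Sum>j<n. u i \<bullet> u j) = 0"
proof -
  have "(\<Sum>i<n. \<Sum>j<n. u i \<bullet> u j) = (\<Sum>r<n. (\<Sum>i<n. 1 * u i $ r)^2)"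
    using gram_qf[of n u n "\<lambda>_. 1"] u by simp
  also have "\<dots> = 0 \<longleftrightarrow> (\<forall>r\<in>{..<n}. (\<Sum>i<n. 1 * u i $ r)^2 = 0)"
    by (rule sum_nonneg_eq_0_iff) auto
  finally show ?thesis by auto
qed

lemma embK_mix:
  assumes E: "E \<subseteq> {(i,j). i < 2*N \<and> j < 2*N}"
    and k1: "(u1,v1) \<in> embK N" and k2: "(u2,v2) \<in> embK N" and t: "0 \<le> t" "t \<le> 1"
  shows "\<exists>u v. (u,v) \<in> embK N \<and> phi0 E u v = t * phi0 E u1 v1 + (1 - t) * phi0 E u2 v2 \<and>
     (\<forall>i<N. Phi N u v i = t * Phi N u1 v1 i + (1 - t) * Phi N u2 v2 i)"
proof -
  let ?n = "2*N"
  have c1: "\<And>i. i < ?n \<Longrightarrow> u1 i \<in> carrier_vec ?n \<and> v1 i \<in> carrier_vec ?n"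
    and s1: "(\<Sum>i<?n. sqn (u1 i)) = 1" "(\<Sum>i<?n. sqn (v1 i)) = 1"
    and z1: "\<forall>k<?n. (\<Sum>i<?n. u1 i $ k) = 0" using k1 unfolding embK_def by auto
  have c2: "\<And>i. i < ?n \<Longrightarrow> u2 i \<in> carrier_vec ?n \<and> v2 i \<in> carrier_vec ?n"
    and s2: "(\<Sum>i<?n. sqn (u2 i)) = 1" "(\<Sum>i<?n. sqn (v2 i)) = 1"
    and z2: "\<forall>k<?n. (\<Sum>i<?n. u2 i $ k) = 0" using k2 unfolding embK_def by auto
  obtain u where u: "\<forall>k<?n. u k \<in> carrier_vec ?n"
    and gu: "\<forall>i<?n. \<forall>j<?n. u i \<bullet> u j = t * (u1 i \<bullet> u1 j) + (1 - t) * (u2 i \<bullet> u2 j)"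
    using gram_mix[of ?n u1 u2 t] c1 c2 t by blast
  obtain v where v: "\<forall>k<?n. v k \<in> carrier_vec ?n"
    and gv: "\<forall>i<?n. \<forall>j<?n. v i \<bullet> v j = t * (v1 i \<bullet> v1 j) + (1 - t) * (v2 i \<bullet> v2 j)"
    using gram_mix[of ?n v1 v2 t] c1 c2 t by blast
  have mu: "sqn (u i - u j) = t * sqn (u1 i - u1 j) + (1 - t) * sqn (u2 i - u2 j)" if ij: "i < ?n" "j < ?n" for i j
  proof -
    have e: "u i \<bullet> u i = t * (u1 i \<bullet> u1 i) + (1 - t) * (u2 i \<bullet> u2 i)"
      "u j \<bullet> u j = t * (u1 j \<bullet> u1 j) + (1 - t) * (u2 j \<bullet> u2 j)"
      "u i \<bullet> u j = t * (u1 i \<bullet> u1 j) + (1 - t) * (u2 i \<bullet> u2 j)" using gu ij by auto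
    have A: "sqn (u i - u j) = u i \<bullet> u i + u j \<bullet> u j - 2 * (u i \<bullet> u j)"
      by (rule sqn_diff[of _ ?n]) (use u ij in auto)
    have B: "sqn (u1 i - u1 j) = u1 i \<bullet> u1 i + u1 j \<bullet> u1 j - 2 * (u1 i \<bullet> u1 j)"
      by (rule sqn_diff[of _ ?n]) (use c1 ij in auto)
    have C: "sqn (u2 i - u2 j) = u2 i \<bullet> u2 i + u2 j \<bullet> u2 j - 2 * (u2 i \<bullet> u2 j)"
      by (rule sqn_diff[of _ ?n]) (use c2 ij in auto)
    show ?thesis unfolding A B C e by (simp add: algebra_simps)
  qed
  have mv: "sqn (v i - v j) = t * sqn (v1 i - v1 j) + (1 - t) * sqn (v2 i - v2 j)" if ij: "i < ?n" "j < ?n" for i j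
  proof -
    have e: "v i \<bullet> v i = t * (v1 i \<bullet> v1 i) + (1 - t) * (v2 i \<bullet> v2 i)"
      "v j \<bullet> v j = t * (v1 j \<bullet> v1 j) + (1 - t) * (v2 j \<bullet> v2 j)"
      "v i \<bullet> v j = t * (v1 i \<bullet> v1 j) + (1 - t) * (v2 i \<bullet> v2 j)" using gv ij by auto
    have A: "sqn (v i - v j) = v i \<bullet> v i + v j \<bullet> v j - 2 * (v i \<bullet> v j)"
      by (rule sqn_diff[of _ ?n]) (use v ij in auto)
    have B: "sqn (v1 i - v1 j) = v1 i \<bullet> v1 i + v1 j \<bullet> v1 j - 2 * (v1 i \<bullet> v1 j)"
      by (rule sqn_diff[of _ ?n]) (use c1 ij in auto)
    have C: "sqn (v2 i - v2 j) = v2 i \<bullet> v2 i + v2 j \<bullet> v2 j - 2 * (v2 i \<bullet> v2 j)"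
      by (rule sqn_diff[of _ ?n]) (use c2 ij in auto)
    show ?thesis unfolding A B C e by (simp add: algebra_simps)
  qed
  have su: "(\<Sum>i<?n. sqn (u i)) = 1"
  proof -
    have "(\<Sum>i<?n. sqn (u i)) = (\<Sum>i<?n. t * sqn (u1 i) + (1 - t) * sqn (u2 i))"
      using gu unfolding sqn_def by (intro sum.cong) auto
    also have "\<dots> = 1" using s1 s2 by (simp add: sum.distrib sum_distrib_left[symmetric])
    finally show ?thesis .
  qed
  have sv: "(\<Sum>i<?n. sqn (v i)) = 1"
  proof -
    have "(\<Sum>i<?n. sqn (v i)) = (\<Sum>i<?n. t * sqn (v1 i) + (1 - t) * sqn (v2 i))"
      using gv unfolding sqn_def by (intro sum.cong) auto
    also have "\<dots> = 1" using s1 s2 by (simp add: sum.distrib sum_distrib_left[symmetric])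
    finally show ?thesis .
  qed
  have zu: "\<forall>k<?n. (\<Sum>i<?n. u i $ k) = 0"
  proof -
    have g1: "(\<Sum>i<?n. \<Sum>j<?n. u1 i \<bullet> u1 j) = 0" using colsum_gram[of ?n u1] c1 z1 by auto
    have g2: "(\<Sum>i<?n. \<Sum>j<?n. u2 i \<bullet> u2 j) = 0" using colsum_gram[of ?n u2] c2 z2 by auto
    have "(\<Sum>i<?n. \<Sum>j<?n. u i \<bullet> u j) = (\<Sum>i<?n. \<Sum>j<?n. t * (u1 i \<bullet> u1 j) + (1 - t) * (u2 i \<bullet> u2 j))"
      using gu by (intro sum.cong refl) auto
    also have "\<dots> = t * (\<Sum>i<?n. \<Sum>j<?n. u1 i \<bullet> u1 j) + (1 - t) * (\<Sum>i<?n. \<Sum>j<?n. u2 i \<bullet> u2 j)"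
      by (simp add: sum.distrib sum_distrib_left)
    finally have "(\<Sum>i<?n. \<Sum>j<?n. u i \<bullet> u j) = 0" using g1 g2 by simp
    thus ?thesis using colsum_gram[of ?n u] u by auto
  qed
  have K: "(u,v) \<in> embK N" unfolding embK_def using u v su sv zu by auto
  have P0: "phi0 E u v = t * phi0 E u1 v1 + (1 - t) * phi0 E u2 v2"
  proof -
    have a: "(\<Sum>(i,j)\<in>E. sqn (v i - v j)) = t * (\<Sum>(i,j)\<in>E. sqn (v1 i - v1 j)) + (1 - t) * (\<Sum>(i,j)\<in>E. sqn (v2 i - v2 j))"
    proof -
      have "(\<Sum>(i,j)\<in>E. sqn (v i - v j)) = (\<Sum>(i,j)\<in>E. t * sqn (v1 i - v1 j) + (1 - t) * sqn (v2 i - v2 j))"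
        using E mv by (intro sum.cong refl) auto
      thus ?thesis by (simp add: sum.distrib sum_distrib_left case_prod_beta)
    qed
    have b: "(\<Sum>(i,j)\<in>E. sqn (u i - u j)) = t * (\<Sum>(i,j)\<in>E. sqn (u1 i - u1 j)) + (1 - t) * (\<Sum>(i,j)\<in>E. sqn (u2 i - u2 j))"
    proof -
      have "(\<Sum>(i,j)\<in>E. sqn (u i - u j)) = (\<Sum>(i,j)\<in>E. t * sqn (u1 i - u1 j) + (1 - t) * sqn (u2 i - u2 j))"
        using E mu by (intro sum.cong refl) auto
      thus ?thesis by (simp add: sum.distrib sum_distrib_left case_prod_beta)
    qed
    show ?thesis unfolding phi0_def a b by (simp add: algebra_simps)
  qed
  have P: "\<forall>i<N. Phi N u v i = t * Phi N u1 v1 i + (1 - t) * Phi N u2 v2 i"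
    unfolding Phi_def using mu mv by (auto simp: algebra_simps)
  show ?thesis using K P0 P by blast
qed

definition emb1 :: "nat \<Rightarrow> real vec \<Rightarrow> nat \<Rightarrow> real vec" where
  "emb1 n x = (\<lambda>k. vec n (\<lambda>r. if r = 0 then x$k else 0))"

lemma emb1_carrier: "emb1 n x k \<in> carrier_vec n"
  unfolding emb1_def by simp

lemma emb1_sqn_diff: "0 < n \<Longrightarrow> sqn (emb1 n x i - emb1 n x j) = (x$i - x$j)^2"
  unfolding emb1_def sqn_def
  by (simp add: scalar_prod_def lessThan_atLeast0[symmetric] power2_eq_square if_distrib sum.delta cong: if_cong)

lemma emb1_sqn: "0 < n \<Longrightarrow> sqn (emb1 n x k) = (x$k)^2"
  unfolding emb1_def sqn_def
  by (simp add: scalar_prod_def lessThan_atLeast0[symmetric] power2_eq_square if_distrib sum.delta cong: if_cong)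

lemma emb1_colsum: "r < n \<Longrightarrow> (\<Sum>i<m. emb1 n x i $ r) = (if r = 0 then (\<Sum>i<m. x$i) else 0)"
  unfolding emb1_def by simp

lemma Lw_inv:
  fixes y :: "real vec"
  assumes E: "E \<subseteq> {(i,j). i < 2*N \<and> j < 2*N}" and y: "y \<in> carrier_vec (2*N)"
  shows "(y + a \<cdot>\<^sub>v vec (2*N) (\<lambda>_. 1)) \<bullet> (Lw N E w *\<^sub>v (y + a \<cdot>\<^sub>v vec (2*N) (\<lambda>_. 1))) = y \<bullet> (Lw N E w *\<^sub>v y)"
proof -
  have c: "y + a \<cdot>\<^sub>v vec (2*N) (\<lambda>_. 1) \<in> carrier_vec (2*N)" using y by simp
  show ?thesis unfolding qf_Lw[OF E c] qf_Lw[OF E y]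
  proof (intro arg_cong2[where f = "(+)"] sum.cong refl)
    fix i assume "i \<in> {..<N}"
    thus "w i * ((y + a \<cdot>\<^sub>v vec (2*N) (\<lambda>_. 1)) $ i - (y + a \<cdot>\<^sub>v vec (2*N) (\<lambda>_. 1)) $ (N + i))\<^sup>2 =
          w i * (y $ i - y $ (N + i))\<^sup>2" using y by simp
  next
    fix p assume "p \<in> E"
    thus "(case p of (i, j) \<Rightarrow> ((y + a \<cdot>\<^sub>v vec (2*N) (\<lambda>_. 1)) $ i - (y + a \<cdot>\<^sub>v vec (2*N) (\<lambda>_. 1)) $ j)\<^sup>2) =
          (case p of (i, j) \<Rightarrow> (y $ i - y $ j)\<^sup>2)" using y E by auto
  qed
qed

lemma Lw_psd:
  assumes E: "E \<subseteq> {(i,j). i < 2*N \<and> j < 2*N}" and x: "x \<in> carrier_vec (2*N)" and w: "\<forall>i<N. 0 \<le> w i"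
  shows "0 \<le> x \<bullet> (Lw N E w *\<^sub>v x)"
  unfolding qf_Lw[OF E x] using w by (intro add_nonneg_nonneg sum_nonneg) auto

lemma unit_scale:
  fixes z :: "real vec"
  assumes z: "z \<in> carrier_vec n" and zz: "0 < z \<bullet> z"
  defines "a \<equiv> 1 / sqrt (z \<bullet> z)"
  shows "(a \<cdot>\<^sub>v z) \<bullet> (a \<cdot>\<^sub>v z) = 1" and "a^2 = 1 / (z \<bullet> z)" and "0 < a"
proof -
  show a2: "a^2 = 1 / (z \<bullet> z)" unfolding a_def using zz by (simp add: power_divide)
  have "(a \<cdot>\<^sub>v z) \<bullet> (a \<cdot>\<^sub>v z) = a^2 * (z \<bullet> z)" using z
    by (simp add: scalar_prod_smult_distrib[of _ n] smult_scalar_prod_distrib[of _ n] power2_eq_square)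
  thus "(a \<cdot>\<^sub>v z) \<bullet> (a \<cdot>\<^sub>v z) = 1" using a2 zz by simp
  show "0 < a" unfolding a_def using zz by simp
qed

lemma sw_construct:
  fixes w :: "nat \<Rightarrow> real"
  assumes E: "E \<subseteq> {(i,j). i < 2*N \<and> j < 2*N}" and N: "0 < N"
    and w: "\<forall>i<N. 0 \<le> w i" and sw: "(\<Sum>i<N. w i) = c"
    and key: "\<And>x y. x \<in> carrier_vec (2*N) \<Longrightarrow> y \<in> carrier_vec (2*N) \<Longrightarrow> x \<bullet> x = 1 \<Longrightarrow> y \<bullet> y = 1 \<Longrightarrow>
        (\<Sum>k<2*N. x$k) = 0 \<Longrightarrow> y \<bullet> (Lw N E w *\<^sub>v y) - x \<bullet> (Lw N E w *\<^sub>v x) \<le> Ve"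
  shows "\<exists>lm l2 mu. sw_feasible N E c w lm l2 mu \<and> lm - l2 = Ve"
proof -
  define n where "n = 2*N"
  have n: "2 \<le> n" using N unfolding n_def by simp
  define L where "L = Lw N E w"
  have L: "L \<in> carrier_mat n n" unfolding L_def n_def by simp
  define one where "one = vec n (\<lambda>_. 1::real)"
  have one: "one \<in> carrier_vec n" unfolding one_def by simp
  define x0 where "x0 = vec n (\<lambda>k. if k = 0 then 1 / sqrt 2 else if k = 1 then - 1 / sqrt 2 else 0 :: real)"
  have x0: "x0 \<in> carrier_vec n" unfolding x0_def by simp
  have x0x0: "x0 \<bullet> x0 = 1"
  proof -
    have "x0 \<bullet> x0 = (\<Sum>k<n. (if k = 0 then 1/2 else if k = 1 then 1/2 else 0 :: real))"
      unfolding x0_def by (simp add: scalar_prod_def lessThan_atLeast0) (intro sum.cong, auto simp: power2_eq_square[symmetric] power_divide)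
    also have "\<dots> = 1" using sum2[of 0 1 n "\<lambda>_. 1/2" "\<lambda>_. 1/2"] n by simp
    finally show ?thesis .
  qed
  have x0s: "(\<Sum>k<n. x0$k) = 0"
  proof -
    have "(\<Sum>k<n. x0$k) = (\<Sum>k<n. (if k = 0 then 1 / sqrt 2 else if k = 1 then - 1 / sqrt 2 else 0 :: real))"
      unfolding x0_def by (intro sum.cong) auto
    also have "\<dots> = 0" using sum2[of 0 1 n "\<lambda>_. 1 / sqrt 2" "\<lambda>_. - 1 / sqrt 2"] n by simp
    finally show ?thesis .
  qed
  define S where "S = {y \<bullet> (L *\<^sub>v y) | y. y \<in> carrier_vec n \<and> y \<bullet> y = 1}"
  have Sne: "S \<noteq> {}" unfolding S_def using x0 x0x0 by blast
  have Sbdd: "bdd_above S" unfolding S_def bdd_above_def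
    using key[OF x0[unfolded n_def] _ x0x0[unfolded n_def] _ x0s[unfolded n_def]] unfolding L_def n_def
    by (intro exI[of _ "Ve + x0 \<bullet> (Lw N E w *\<^sub>v x0)"]) force
  define lm where "lm = Sup S"
  define l2 where "l2 = lm - Ve"
  define mu where "mu = \<bar>l2\<bar>"
  have up: "y \<bullet> (L *\<^sub>v y) \<le> lm" if "y \<in> carrier_vec n" "y \<bullet> y = 1" for y
    unfolding lm_def using that by (intro cSup_upper[OF _ Sbdd]) (auto simp: S_def)
  have low: "l2 \<le> x \<bullet> (L *\<^sub>v x)" if x: "x \<in> carrier_vec n" "x \<bullet> x = 1" "(\<Sum>k<n. x$k) = 0" for x
  proof -
    have "lm \<le> Ve + x \<bullet> (L *\<^sub>v x)" unfolding lm_def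
    proof (rule cSup_least[OF Sne])
      fix s assume "s \<in> S"
      then obtain y where y: "y \<in> carrier_vec n" "y \<bullet> y = 1" "s = y \<bullet> (L *\<^sub>v y)" unfolding S_def by blast
      show "s \<le> Ve + x \<bullet> (L *\<^sub>v x)" using key[of x y] x y unfolding L_def n_def by force
    qed
    thus ?thesis unfolding l2_def by simp
  qed
  have zero_qf: "z \<bullet> (L *\<^sub>v z) = 0 \<and> z \<bullet> z = 0" if z: "z \<in> carrier_vec n" "\<not> 0 < z \<bullet> z" for z
  proof -
    have "z \<bullet> z = 0" using z(2) sp_self_nonneg[of z] by simp
    hence "z = 0\<^sub>v n" using sp_self_zero[OF z(1)] by simp
    thus ?thesis using L by simp
  qed
  have nsd: "nsd (L - lm \<cdot>\<^sub>m 1\<^sub>m n)" unfolding nsd_iff[OF L]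
  proof
    fix z :: "real vec" assume z: "z \<in> carrier_vec n"
    show "z \<bullet> (L *\<^sub>v z) \<le> lm * (z \<bullet> z)"
    proof (cases "0 < z \<bullet> z")
      case True
      define a where "a = 1 / sqrt (z \<bullet> z)"
      have a: "(a \<cdot>\<^sub>v z) \<bullet> (a \<cdot>\<^sub>v z) = 1" "a^2 = 1 / (z \<bullet> z)"
        using unit_scale[OF z True] unfolding a_def by auto
      have "a^2 * (z \<bullet> (L *\<^sub>v z)) \<le> lm" using up[of "a \<cdot>\<^sub>v z"] z a(1) qf_scale[OF L z, of a] by simp
      hence "(z \<bullet> (L *\<^sub>v z)) / (z \<bullet> z) \<le> lm" unfolding a(2) by simp
      thus ?thesis using True by (simp add: divide_le_eq mult.commute)
    next
      case False thus ?thesis using zero_qf[OF z False] by simp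
    qed
  qed
  have psd: "psd (L + mu \<cdot>\<^sub>m ones_mat n - l2 \<cdot>\<^sub>m 1\<^sub>m n)" unfolding psd_iff[OF L]
  proof
    fix z :: "real vec" assume z: "z \<in> carrier_vec n"
    define al where "al = (\<Sum>k<n. z$k) / real n"
    define z' where "z' = z + (- al) \<cdot>\<^sub>v one"
    have z': "z' \<in> carrier_vec n" unfolding z'_def using z one by simp
    have zz': "z = z' + al \<cdot>\<^sub>v one" unfolding z'_def using z one by (intro eq_vecI) auto
    have sz': "(\<Sum>k<n. z'$k) = 0"
    proof -
      have "(\<Sum>k<n. z'$k) = (\<Sum>k<n. z$k) - al * real n"
        unfolding z'_def one_def using z by (simp add: sum_subtractf)
      thus ?thesis unfolding al_def using n by simp
    qed
    have qz: "z \<bullet> (L *\<^sub>v z) = z' \<bullet> (L *\<^sub>v z')"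
      unfolding zz' L_def one_def n_def by (rule Lw_inv[OF E z'[unfolded n_def]])
    have z'o: "z' \<bullet> one = 0" using sz' unfolding one_def using z' by (simp add: scalar_prod_def lessThan_atLeast0)
    have oo: "one \<bullet> one = real n" unfolding one_def by (simp add: scalar_prod_def)
    have nz: "z \<bullet> z = z' \<bullet> z' + al^2 * real n"
    proof -
      have "z \<bullet> z = z' \<bullet> z' + al * (z' \<bullet> one) + al * (one \<bullet> z') + al * al * (one \<bullet> one)"
        unfolding zz' using z' one
        by (simp add: scalar_prod_add_distrib[of _ n] add_scalar_prod_distrib[of _ n]
            scalar_prod_smult_distrib[of _ n] smult_scalar_prod_distrib[of _ n] algebra_simps)
      thus ?thesis using z'o oo comm_scalar_prod[OF z' one] by (simp add: power2_eq_square)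
    qed
    have main: "l2 * (z' \<bullet> z') \<le> z' \<bullet> (L *\<^sub>v z')"
    proof (cases "0 < z' \<bullet> z'")
      case True
      define a where "a = 1 / sqrt (z' \<bullet> z')"
      have a: "(a \<cdot>\<^sub>v z') \<bullet> (a \<cdot>\<^sub>v z') = 1" "a^2 = 1 / (z' \<bullet> z')"
        using unit_scale[OF z' True] unfolding a_def by auto
      have sa: "(\<Sum>k<n. (a \<cdot>\<^sub>v z')$k) = 0" using sz' z' by (simp add: sum_distrib_left[symmetric])
      have "l2 \<le> a^2 * (z' \<bullet> (L *\<^sub>v z'))" using low[of "a \<cdot>\<^sub>v z'"] z' a(1) sa qf_scale[OF L z', of a] by simp
      hence "l2 \<le> (z' \<bullet> (L *\<^sub>v z')) / (z' \<bullet> z')" unfolding a(2) by simp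
      thus ?thesis using True by (simp add: le_divide_eq mult.commute)
    next
      case False thus ?thesis using zero_qf[OF z' False] by simp
    qed
    have sq: "(\<Sum>k<n. z$k)^2 = al^2 * (real n)^2" unfolding al_def using n by (simp add: power_divide)
    have "l2 * (al^2 * real n) \<le> mu * (al^2 * (real n)^2)"
    proof -
      have "l2 * (al^2 * real n) \<le> mu * (al^2 * real n)" unfolding mu_def
        by (intro mult_right_mono) auto
      also have "\<dots> \<le> mu * (al^2 * (real n)^2)" unfolding mu_def using n
        by (intro mult_left_mono mult_left_mono) (auto simp: power2_eq_square)
      finally show ?thesis .
    qed
    thus "l2 * (z \<bullet> z) \<le> z \<bullet> (L *\<^sub>v z) + mu * (\<Sum>k<n. z$k)^2"
      unfolding nz qz sq using main by (simp add: distrib_left)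
  qed
  have "sw_feasible N E c w lm l2 mu"
    unfolding sw_feasible_def using nsd psd w sw unfolding L_def n_def by simp
  moreover have "lm - l2 = Ve" unfolding l2_def by simp
  ultimately show ?thesis by blast
qed

lemma strong_duality:
  fixes Ve V c :: real
  assumes E: "E \<subseteq> {(i,j). i < 2*N \<and> j < 2*N}" and c: "0 \<le> c" and N: "0 < N"
    and opt: "\<And>xi' u' v'. emb_feasible N xi' u' v' \<Longrightarrow> emb_obj N E c xi' u' v' \<le> Ve"
    and swopt: "\<And>w' lm' l2' mu'. sw_feasible N E c w' lm' l2' mu' \<Longrightarrow> V \<le> lm' - l2'"
  shows "V \<le> Ve"
proof -
  define n where "n = 2*N"
  have n: "0 < n" using N unfolding n_def by simp
  define G where "G = (\<lambda>(k :: (nat \<Rightarrow> real vec) \<times> (nat \<Rightarrow> real vec)) i. phi0 E (fst k) (snd k) + c * Phi N (fst k) (snd k) i)"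
  have mix: "\<exists>k\<in>embK N. \<forall>i<N. t * G k1 i + (1 - t) * G k2 i \<le> G k i"
    if k1: "k1 \<in> embK N" and k2: "k2 \<in> embK N" and t: "0 \<le> t" "t \<le> 1" for k1 k2 t
  proof -
    obtain u1 v1 where 1: "k1 = (u1,v1)" by (cases k1)
    obtain u2 v2 where 2: "k2 = (u2,v2)" by (cases k2)
    obtain u v where uv: "(u,v) \<in> embK N" "phi0 E u v = t * phi0 E u1 v1 + (1 - t) * phi0 E u2 v2"
      "\<forall>i<N. Phi N u v i = t * Phi N u1 v1 i + (1 - t) * Phi N u2 v2 i"
      using embK_mix[OF E k1[unfolded 1] k2[unfolded 2] t] by blast
    show ?thesis
    proof (rule bexI[OF _ uv(1)], intro allI impI)
      fix i assume i: "i < N"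
      have "G (u,v) i = t * G k1 i + (1 - t) * G k2 i"
        unfolding G_def 1 2 fst_conv snd_conv prod.case uv(2) uv(3)[rule_format, OF i]
        by (simp add: algebra_simps)
      thus "t * G k1 i + (1 - t) * G k2 i \<le> G (u, v) i" by simp
    qed
  qed
  have bnd: "\<exists>i<N. G k i \<le> Ve" if k: "k \<in> embK N" for k
  proof -
    obtain u v where 1: "k = (u,v)" by (cases k)
    define xi' where "xi' = Min (Phi N u v ` {..<N})"
    have "xi' \<in> Phi N u v ` {..<N}" unfolding xi'_def using N by (intro Min_in) auto
    then obtain i where i: "i < N" "Phi N u v i = xi'" by auto
    have "\<forall>j<N. xi' \<le> Phi N u v j" unfolding xi'_def by auto
    hence "emb_feasible N xi' u v" unfolding emb_feasible_iff using k 1 by simp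
    hence "emb_obj N E c xi' u v \<le> Ve" by (rule opt)
    hence "G k i \<le> Ve" unfolding emb_obj_eq G_def 1 using i by (simp add: algebra_simps)
    thus ?thesis using i by blast
  qed
  obtain l where l: "\<forall>i<N. 0 \<le> l i" "(\<Sum>i<N. l i) = 1" "\<forall>k\<in>embK N. (\<Sum>i<N. l i * G k i) \<le> Ve"
    using minimax_fin[OF N mix bnd] by blast
  define w where "w = (\<lambda>i. c * l i)"
  have w: "\<forall>i<N. 0 \<le> w i" unfolding w_def using l(1) c by simp
  have sw: "(\<Sum>i<N. w i) = c" unfolding w_def using l(2) by (simp add: sum_distrib_left[symmetric])
  have key: "y \<bullet> (Lw N E w *\<^sub>v y) - x \<bullet> (Lw N E w *\<^sub>v x) \<le> Ve"
    if x: "x \<in> carrier_vec (2*N)" and y: "y \<in> carrier_vec (2*N)" and xx: "x \<bullet> x = 1" and yy: "y \<bullet> y = 1"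
      and sx: "(\<Sum>k<2*N. x$k) = 0" for x y
  proof -
    define u where "u = emb1 n x"
    define v where "v = emb1 n y"
    have sq: "(\<Sum>i<n. sqn (emb1 n z i)) = z \<bullet> z" if "z \<in> carrier_vec n" for z
      using that n by (simp add: emb1_sqn scalar_prod_def lessThan_atLeast0 power2_eq_square)
    have K: "(u, v) \<in> embK N" unfolding embK_def u_def v_def
      using emb1_carrier sq[of x] sq[of y] x y xx yy sx emb1_colsum unfolding n_def by auto
    have "(\<Sum>i<N. l i * G (u,v) i) \<le> Ve" using l(3) K by blast
    moreover have "(\<Sum>i<N. l i * G (u,v) i) = phi0 E u v + (\<Sum>i<N. w i * Phi N u v i)"
      unfolding G_def w_def using l(2)
      by (simp add: distrib_left sum.distrib sum_distrib_right[symmetric] algebra_simps)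
    moreover have "phi0 E u v + (\<Sum>i<N. w i * Phi N u v i) = y \<bullet> (Lw N E w *\<^sub>v y) - x \<bullet> (Lw N E w *\<^sub>v x)"
    proof -
      have p0: "phi0 E u v = (\<Sum>(i,j)\<in>E. (y$i - y$j)^2) - (\<Sum>(i,j)\<in>E. (x$i - x$j)^2)"
        unfolding phi0_def u_def v_def using emb1_sqn_diff[OF n] by (simp add: case_prod_beta)
      have p: "Phi N u v i = (y$i - y$(N+i))^2 - (x$i - x$(N+i))^2" for i
        unfolding Phi_def u_def v_def using emb1_sqn_diff[OF n] by simp
      show ?thesis unfolding qf_Lw[OF E x] qf_Lw[OF E y] p0 p
        by (simp add: right_diff_distrib sum_subtractf)
    qed
    ultimately show ?thesis by simp
  qed
  obtain lm l2 mu where "sw_feasible N E c w lm l2 mu" "lm - l2 = Ve"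
    using sw_construct[OF E N w sw key] by blast
  thus ?thesis using swopt by fastforce
qed

lemma sqn_coords: "a \<in> carrier_vec n \<Longrightarrow> b \<in> carrier_vec n \<Longrightarrow> sqn (a - b) = (\<Sum>r<n. (a$r - b$r)^2)"
  unfolding sqn_def by (simp add: scalar_prod_def lessThan_atLeast0 power2_eq_square)

lemma sqn_coords1: "a \<in> carrier_vec n \<Longrightarrow> sqn a = (\<Sum>r<n. (a$r)^2)"
  unfolding sqn_def by (simp add: scalar_prod_def lessThan_atLeast0 power2_eq_square)

lemma EI_qf:
  assumes E: "E \<subseteq> {(i,j). i < 2*N \<and> j < 2*N}" and u: "\<And>k. k < 2*N \<Longrightarrow> u k \<in> carrier_vec (2*N)"
  shows "(\<Sum>r<2*N. vec (2*N) (\<lambda>k. u k $ r) \<bullet> (Lw N E w *\<^sub>v vec (2*N) (\<lambda>k. u k $ r)))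
       = (\<Sum>i<N. w i * sqn (u i - u (N+i))) + (\<Sum>(i,j)\<in>E. sqn (u i - u j))"
proof -
  let ?n = "2*N"
  have "(\<Sum>r<?n. vec ?n (\<lambda>k. u k $ r) \<bullet> (Lw N E w *\<^sub>v vec ?n (\<lambda>k. u k $ r)))
      = (\<Sum>r<?n. (\<Sum>i<N. w i * (u i $ r - u (N+i) $ r)^2) + (\<Sum>p\<in>E. (u (fst p) $ r - u (snd p) $ r)^2))"
  proof (intro sum.cong refl)
    fix r assume r: "r \<in> {..<?n}"
    have E': "\<And>p. p \<in> E \<Longrightarrow> fst p < ?n \<and> snd p < ?n" using E by auto
    show "vec ?n (\<lambda>k. u k $ r) \<bullet> (Lw N E w *\<^sub>v vec ?n (\<lambda>k. u k $ r))
        = (\<Sum>i<N. w i * (u i $ r - u (N+i) $ r)^2) + (\<Sum>p\<in>E. (u (fst p) $ r - u (snd p) $ r)^2)"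
      unfolding qf_Lw[OF E, of "vec ?n (\<lambda>k. u k $ r)", simplified]
      using E' by (simp add: case_prod_beta)
  qed
  also have "\<dots> = (\<Sum>i<N. w i * (\<Sum>r<?n. (u i $ r - u (N+i) $ r)^2)) + (\<Sum>p\<in>E. \<Sum>r<?n. (u (fst p) $ r - u (snd p) $ r)^2)"
    by (simp add: sum.distrib sum_distrib_left sum.swap[of _ "{..<?n}"])
  also have "\<dots> = (\<Sum>i<N. w i * sqn (u i - u (N+i))) + (\<Sum>(i,j)\<in>E. sqn (u i - u j))"
  proof -
    have "(\<Sum>i<N. w i * (\<Sum>r<?n. (u i $ r - u (N+i) $ r)^2)) = (\<Sum>i<N. w i * sqn (u i - u (N+i)))"
      using u by (intro sum.cong refl) (simp add: sqn_coords[of _ ?n])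
    moreover have "(\<Sum>p\<in>E. \<Sum>r<?n. (u (fst p) $ r - u (snd p) $ r)^2) = (\<Sum>(i,j)\<in>E. sqn (u i - u j))"
      unfolding case_prod_beta using u E by (intro sum.cong refl) (auto simp: sqn_coords[of _ ?n])
    ultimately show ?thesis by simp
  qed
  finally show ?thesis .
qed

lemma EI_norm:
  assumes u: "\<And>k. k < n \<Longrightarrow> u k \<in> carrier_vec n"
  shows "(\<Sum>r<n. vec n (\<lambda>k. u k $ r) \<bullet> vec n (\<lambda>k. u k $ r)) = (\<Sum>k<n. sqn (u k))"
proof -
  have "(\<Sum>r<n. vec n (\<lambda>k. u k $ r) \<bullet> vec n (\<lambda>k. u k $ r)) = (\<Sum>r<n. \<Sum>k<n. (u k $ r)^2)"
    by (simp add: scalar_prod_def lessThan_atLeast0 power2_eq_square)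
  also have "\<dots> = (\<Sum>k<n. \<Sum>r<n. (u k $ r)^2)" by (rule sum.swap)
  also have "\<dots> = (\<Sum>k<n. sqn (u k))" using u by (intro sum.cong refl) (simp add: sqn_coords1[of _ n])
  finally show ?thesis .
qed

lemma eig_comb:
  fixes A :: "real mat"
  assumes A: "A \<in> carrier_mat n n" and u: "\<And>k. k < n \<Longrightarrow> u k \<in> carrier_vec n"
    and ev: "\<And>r. r < n \<Longrightarrow> A *\<^sub>v vec n (\<lambda>k. u k $ r) = l \<cdot>\<^sub>v vec n (\<lambda>k. u k $ r)"
    and p: "p \<in> carrier_vec n"
  shows "A *\<^sub>v vec n (\<lambda>k. p \<bullet> u k) = l \<cdot>\<^sub>v vec n (\<lambda>k. p \<bullet> u k)"
proof (rule eq_vecI)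
  fix i assume "i < dim_vec (l \<cdot>\<^sub>v vec n (\<lambda>k. p \<bullet> u k))"
  hence i: "i < n" by simp
  have pu: "p \<bullet> u k = (\<Sum>r<n. p$r * u k $ r)" if "k < n" for k
    using u[OF that] by (simp add: scalar_prod_def lessThan_atLeast0)
  have evi: "(\<Sum>k<n. A $$ (i,k) * u k $ r) = l * u i $ r" if r: "r < n" for r
  proof -
    have "(A *\<^sub>v vec n (\<lambda>k. u k $ r)) $ i = (l \<cdot>\<^sub>v vec n (\<lambda>k. u k $ r)) $ i" using ev[OF r] by simp
    thus ?thesis using A i by (simp add: scalar_prod_def row_def lessThan_atLeast0)
  qed
  have "(A *\<^sub>v vec n (\<lambda>k. p \<bullet> u k)) $ i = (\<Sum>k<n. A $$ (i,k) * (\<Sum>r<n. p$r * u k $ r))"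
    using A i pu by (simp add: scalar_prod_def row_def lessThan_atLeast0)
  also have "\<dots> = (\<Sum>r<n. p$r * (\<Sum>k<n. A $$ (i,k) * u k $ r))"
  proof -
    have "(\<Sum>k<n. A $$ (i,k) * (\<Sum>r<n. p$r * u k $ r)) = (\<Sum>k<n. \<Sum>r<n. p$r * (A $$ (i,k) * u k $ r))"
      by (intro sum.cong refl) (simp add: sum_distrib_left algebra_simps)
    also have "\<dots> = (\<Sum>r<n. \<Sum>k<n. p$r * (A $$ (i,k) * u k $ r))" by (rule sum.swap)
    also have "\<dots> = (\<Sum>r<n. p$r * (\<Sum>k<n. A $$ (i,k) * u k $ r))" by (simp add: sum_distrib_left)
    finally show ?thesis .
  qed
  also have "\<dots> = (\<Sum>r<n. p$r * (l * u i $ r))" by (intro sum.cong refl) (simp add: evi)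
  also have "\<dots> = l * (p \<bullet> u i)" using pu[OF i] by (simp add: sum_distrib_left algebra_simps)
  finally show "(A *\<^sub>v vec n (\<lambda>k. p \<bullet> u k)) $ i = (l \<cdot>\<^sub>v vec n (\<lambda>k. p \<bullet> u k)) $ i" using i by simp
qed (use A in simp)

lemma cs_le:
  fixes L :: "real mat"
  assumes L: "L \<in> carrier_mat n n" and sym: "L\<^sup>T = L"
    and le: "\<And>z. z \<in> carrier_vec n \<Longrightarrow> z \<bullet> (L *\<^sub>v z) \<le> c * (z \<bullet> z)"
    and x: "x \<in> carrier_vec n" and xe: "x \<bullet> (L *\<^sub>v x) = c * (x \<bullet> x)"
  shows "L *\<^sub>v x = c \<cdot>\<^sub>v x"
proof -
  define M where "M = c \<cdot>\<^sub>m 1\<^sub>m n - L"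
  have M: "M \<in> carrier_mat n n" unfolding M_def using L by (intro minus_carrier_mat)
  have Mv: "M *\<^sub>v z = c \<cdot>\<^sub>v z - L *\<^sub>v z" if z: "z \<in> carrier_vec n" for z
    unfolding M_def using L z by (simp add: minus_mult_distrib_mat_vec[of _ n n] smult_one_mv)
  have MT: "M\<^sup>T = M"
  proof (rule eq_matI)
    fix i j assume ij: "i < dim_row M" "j < dim_col M"
    hence "i < n" "j < n" using M by auto
    moreover have "L $$ (j, i) = L $$ (i, j)" using sym L \<open>i < n\<close> \<open>j < n\<close>
      by (metis carrier_matD(1) carrier_matD(2) index_transpose_mat(1))
    ultimately show "M\<^sup>T $$ (i, j) = M $$ (i, j)" unfolding M_def using L by auto
  qed (use M in auto)
  have qf: "z \<bullet> (M *\<^sub>v z) = c * (z \<bullet> z) - z \<bullet> (L *\<^sub>v z)" if z: "z \<in> carrier_vec n" for z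
    using z L by (simp add: Mv scalar_prod_minus_distrib[of _ n] scalar_prod_smult_distrib[of _ n])
  have "M *\<^sub>v x = 0\<^sub>v n"
    by (rule cs_lemma[OF M MT]) (use qf le x xe in auto)
  hence "c \<cdot>\<^sub>v x - L *\<^sub>v x = 0\<^sub>v n" using Mv[OF x] by simp
  show ?thesis
  proof (rule eq_vecI)
    fix i assume "i < dim_vec (c \<cdot>\<^sub>v x)"
    hence i: "i < n" using x by simp
    have "(c \<cdot>\<^sub>v x - L *\<^sub>v x) $ i = 0" using \<open>c \<cdot>\<^sub>v x - L *\<^sub>v x = 0\<^sub>v n\<close> i by simp
    thus "(L *\<^sub>v x) $ i = (c \<cdot>\<^sub>v x) $ i" using i x L by simp
  qed (use x L in simp)
qed

lemma cs_ge:
  fixes L :: "real mat"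
  assumes L: "L \<in> carrier_mat n n" and sym: "L\<^sup>T = L"
    and ge: "\<And>z. z \<in> carrier_vec n \<Longrightarrow> l * (z \<bullet> z) \<le> z \<bullet> (L *\<^sub>v z) + m * (\<Sum>k<n. z$k)^2"
    and x: "x \<in> carrier_vec n" and sx: "(\<Sum>k<n. x$k) = 0" and xe: "x \<bullet> (L *\<^sub>v x) = l * (x \<bullet> x)"
  shows "L *\<^sub>v x = l \<cdot>\<^sub>v x"
proof -
  define M where "M = L + m \<cdot>\<^sub>m ones_mat n - l \<cdot>\<^sub>m 1\<^sub>m n"
  have M: "M \<in> carrier_mat n n" unfolding M_def using L
    by (intro minus_carrier_mat) (simp add: ones_mat_def)
  have Mv: "M *\<^sub>v z = L *\<^sub>v z + m \<cdot>\<^sub>v vec n (\<lambda>_. \<Sum>k<n. z$k) - l \<cdot>\<^sub>v z" if z: "z \<in> carrier_vec n" for z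
    unfolding M_def by (rule mv_LJI[OF L z])
  have MT: "M\<^sup>T = M"
  proof (rule eq_matI)
    fix i j assume ij: "i < dim_row M" "j < dim_col M"
    hence "i < n" "j < n" using M by auto
    moreover have "L $$ (j, i) = L $$ (i, j)" using sym L \<open>i < n\<close> \<open>j < n\<close>
      by (metis carrier_matD(1) carrier_matD(2) index_transpose_mat(1))
    ultimately show "M\<^sup>T $$ (i, j) = M $$ (i, j)" unfolding M_def using L by (auto simp: ones_mat_def)
  qed (use M in auto)
  have qf: "z \<bullet> (M *\<^sub>v z) = z \<bullet> (L *\<^sub>v z) + m * (\<Sum>k<n. z$k)^2 - l * (z \<bullet> z)" if z: "z \<in> carrier_vec n" for z
  proof -
    have "z \<bullet> (vec n (\<lambda>_. \<Sum>k<n. z$k)) = (\<Sum>k<n. z$k)^2"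
      using z by (simp add: scalar_prod_def lessThan_atLeast0 power2_eq_square sum_distrib_right)
    thus ?thesis using L z
      by (simp add: Mv scalar_prod_minus_distrib[of _ n] scalar_prod_add_distrib[of _ n]
          scalar_prod_smult_distrib[of _ n])
  qed
  have "M *\<^sub>v x = 0\<^sub>v n"
    by (rule cs_lemma[OF M MT]) (use qf ge x xe sx in auto)
  hence 0: "L *\<^sub>v x + m \<cdot>\<^sub>v vec n (\<lambda>_. 0) - l \<cdot>\<^sub>v x = 0\<^sub>v n" using Mv[OF x] sx by simp
  show ?thesis
  proof (rule eq_vecI)
    fix i assume "i < dim_vec (l \<cdot>\<^sub>v x)"
    hence i: "i < n" using x by simp
    have "(L *\<^sub>v x + m \<cdot>\<^sub>v vec n (\<lambda>_. 0) - l \<cdot>\<^sub>v x) $ i = 0" using 0 i by simp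
    thus "(L *\<^sub>v x) $ i = (l \<cdot>\<^sub>v x) $ i" using i x L by simp
  qed (use x L in simp)
qed

theorem proposition7:
  fixes N :: nat and E1 E2 :: "(nat \<times> nat) set" and c xi :: real
    and wopt :: "nat \<Rightarrow> real" and u v :: "nat \<Rightarrow> real vec"
  assumes E1: "E1 \<subseteq> {(i, j). i < j \<and> j < N}"
    and E2: "E2 \<subseteq> {(i, j). N \<le> i \<and> i < j \<and> j < 2*N}"
    and conn: "connected_on (2*N) (E1 \<union> E2 \<union> E3 N)"
    and c: "0 \<le> c"
    and wopt: "sw_optimal N (E1 \<union> E2) c wopt"
    and emb: "emb_optimal N (E1 \<union> E2) c xi u v"
  shows "\<forall>p\<in>carrier_vec (2*N).
           vec (2*N) (\<lambda>i. p \<bullet> u i) \<in> eigenspace (Lw N (E1 \<union> E2) wopt) (lambda2 (Lw N (E1 \<union> E2) wopt)) \<and>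
           vec (2*N) (\<lambda>i. p \<bullet> v i) \<in> eigenspace (Lw N (E1 \<union> E2) wopt) (lambda_max (Lw N (E1 \<union> E2) wopt))"
proof -
  let ?E = "E1 \<union> E2"
  let ?n = "2*N"
  let ?L = "Lw N ?E wopt"
  have Eb: "?E \<subseteq> {(i,j). i < 2*N \<and> j < 2*N}" using E1 E2 by auto
  obtain lmax l2 mu where feas: "sw_feasible N ?E c wopt lmax l2 mu"
    and optw: "\<And>w' lm' l2' mu'. sw_feasible N ?E c w' lm' l2' mu' \<Longrightarrow> lmax - l2 \<le> lm' - l2'"
    using wopt unfolding sw_optimal_def by blast
  have efeas: "emb_feasible N xi u v"
    and eopt: "\<And>xi' u' v'. emb_feasible N xi' u' v' \<Longrightarrow> emb_obj N ?E c xi' u' v' \<le> emb_obj N ?E c xi u v"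
    using emb unfolding emb_optimal_def by auto
  have K: "(u,v) \<in> embK N" and xiP: "\<forall>i<N. xi \<le> Phi N u v i"
    using efeas unfolding emb_feasible_iff by auto
  have uc: "\<And>k. k < ?n \<Longrightarrow> u k \<in> carrier_vec ?n" and vc: "\<And>k. k < ?n \<Longrightarrow> v k \<in> carrier_vec ?n"
    and su: "(\<Sum>i<?n. sqn (u i)) = 1" and sv: "(\<Sum>i<?n. sqn (v i)) = 1"
    and zu: "\<And>k. k < ?n \<Longrightarrow> (\<Sum>i<?n. u i $ k) = 0"
    using K unfolding embK_def by auto
  have N: "0 < N" using su by (cases N) auto
  have n2: "2 \<le> ?n" using N by simp
  have SD: "lmax - l2 \<le> emb_obj N ?E c xi u v"
    by (rule strong_duality[OF Eb c N]) (use eopt optw in auto)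
  have L: "?L \<in> carrier_mat ?n ?n" by simp
  have Lsym: "?L\<^sup>T = ?L" by (rule Lw_sym)
  have nsd: "nsd (?L - lmax \<cdot>\<^sub>m 1\<^sub>m ?n)" and psd: "psd (?L + mu \<cdot>\<^sub>m ones_mat ?n - l2 \<cdot>\<^sub>m 1\<^sub>m ?n)"
    and sw: "(\<Sum>i<N. wopt i) = c" and wnn: "\<forall>i<N. 0 \<le> wopt i"
    using feas unfolding sw_feasible_def by auto
  have le: "\<And>z. z \<in> carrier_vec ?n \<Longrightarrow> z \<bullet> (?L *\<^sub>v z) \<le> lmax * (z \<bullet> z)"
    using nsd unfolding nsd_iff[OF L] by blast
  have ge: "\<And>z. z \<in> carrier_vec ?n \<Longrightarrow> l2 * (z \<bullet> z) \<le> z \<bullet> (?L *\<^sub>v z) + mu * (\<Sum>k<?n. z$k)^2"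
    using psd unfolding psd_iff[OF L] by blast
  define xr where "xr = (\<lambda>r. vec ?n (\<lambda>k. u k $ r))"
  define yr where "yr = (\<lambda>r. vec ?n (\<lambda>k. v k $ r))"
  have xrc: "xr r \<in> carrier_vec ?n" and yrc: "yr r \<in> carrier_vec ?n" for r
    unfolding xr_def yr_def by auto
  have sxr: "(\<Sum>k<?n. xr r $ k) = 0" if "r < ?n" for r
    unfolding xr_def using zu[OF that] by simp
  define a where "a = (\<lambda>r. lmax * (yr r \<bullet> yr r) - yr r \<bullet> (?L *\<^sub>v yr r))"
  define b where "b = (\<lambda>r. xr r \<bullet> (?L *\<^sub>v xr r) - l2 * (xr r \<bullet> xr r))"
  define T3 where "T3 = (\<Sum>i<N. wopt i * (Phi N u v i - xi))"
  have a0: "0 \<le> a r" for r unfolding a_def using le[OF yrc] by simp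
  have b0: "0 \<le> b r" if "r < ?n" for r unfolding b_def using ge[OF xrc, of r] sxr[OF that] by simp
  have T30: "0 \<le> T3" unfolding T3_def using wnn xiP by (intro sum_nonneg mult_nonneg_nonneg) auto
  have Qv: "(\<Sum>r<?n. yr r \<bullet> (?L *\<^sub>v yr r)) = (\<Sum>i<N. wopt i * sqn (v i - v (N+i))) + (\<Sum>(i,j)\<in>?E. sqn (v i - v j))"
    unfolding yr_def by (rule EI_qf[OF Eb vc])
  have Qu: "(\<Sum>r<?n. xr r \<bullet> (?L *\<^sub>v xr r)) = (\<Sum>i<N. wopt i * sqn (u i - u (N+i))) + (\<Sum>(i,j)\<in>?E. sqn (u i - u j))"
    unfolding xr_def by (rule EI_qf[OF Eb uc])
  have Nv: "(\<Sum>r<?n. yr r \<bullet> yr r) = 1" unfolding yr_def using EI_norm[of ?n v] vc sv by simp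
  have Nu: "(\<Sum>r<?n. xr r \<bullet> xr r) = 1" unfolding xr_def using EI_norm[of ?n u] uc su by simp
  have ident: "(\<Sum>r<?n. a r) + (\<Sum>r<?n. b r) + T3 = lmax - l2 - emb_obj N ?E c xi u v"
  proof -
    have 1: "(\<Sum>r<?n. a r) = lmax - ((\<Sum>i<N. wopt i * sqn (v i - v (N+i))) + (\<Sum>(i,j)\<in>?E. sqn (v i - v j)))"
      unfolding a_def sum_subtractf sum_distrib_left[symmetric] Nv Qv by simp
    have 2: "(\<Sum>r<?n. b r) = ((\<Sum>i<N. wopt i * sqn (u i - u (N+i))) + (\<Sum>(i,j)\<in>?E. sqn (u i - u j))) - l2"
      unfolding b_def sum_subtractf sum_distrib_left[symmetric] Nu Qu by simp
    have 3: "T3 = (\<Sum>i<N. wopt i * sqn (v i - v (N+i))) - (\<Sum>i<N. wopt i * sqn (u i - u (N+i))) - c * xi"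
      unfolding T3_def Phi_def sw[symmetric]
      by (simp add: right_diff_distrib sum_subtractf sum_distrib_right)
    show ?thesis unfolding 1 2 3 emb_obj_def by simp
  qed
  have sum0: "(\<Sum>r<?n. a r) = 0 \<and> (\<Sum>r<?n. b r) = 0"
  proof -
    have "0 \<le> (\<Sum>r<?n. a r)" using a0 by (intro sum_nonneg) auto
    moreover have "0 \<le> (\<Sum>r<?n. b r)" using b0 by (intro sum_nonneg) auto
    ultimately show ?thesis using ident SD T30 by linarith
  qed
  have ar: "a r = 0" if "r < ?n" for r
    using sum0 sum_nonneg_eq_0_iff[of "{..<?n}" a] a0 that by auto
  have br: "b r = 0" if "r < ?n" for r
    using sum0 sum_nonneg_eq_0_iff[of "{..<?n}" b] b0 that by auto
  have evy: "?L *\<^sub>v yr r = lmax \<cdot>\<^sub>v yr r" if r: "r < ?n" for r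
  proof -
    have e: "yr r \<bullet> (?L *\<^sub>v yr r) = lmax * (yr r \<bullet> yr r)" using ar[OF r] unfolding a_def by linarith
    show ?thesis by (rule cs_le[OF L Lsym le yrc e])
  qed
  have evx: "?L *\<^sub>v xr r = l2 \<cdot>\<^sub>v xr r" if r: "r < ?n" for r
  proof -
    have e: "xr r \<bullet> (?L *\<^sub>v xr r) = l2 * (xr r \<bullet> xr r)" using br[OF r] unfolding b_def by linarith
    show ?thesis by (rule cs_ge[OF L Lsym ge xrc sxr[OF r] e])
  qed
  have "\<exists>r<?n. xr r \<bullet> xr r \<noteq> 0"
  proof (rule ccontr)
    assume "\<not> ?thesis"
    hence "(\<Sum>r<?n. xr r \<bullet> xr r) = 0" by (intro sum.neutral) auto
    thus False using Nu by simp
  qed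
  then obtain r0 where r0: "r0 < ?n" "xr r0 \<bullet> xr r0 \<noteq> 0" by blast
  have "\<exists>r<?n. yr r \<bullet> yr r \<noteq> 0"
  proof (rule ccontr)
    assume "\<not> ?thesis"
    hence "(\<Sum>r<?n. yr r \<bullet> yr r) = 0" by (intro sum.neutral) auto
    thus False using Nv by simp
  qed
  then obtain r1 where r1: "r1 < ?n" "yr r1 \<bullet> yr r1 \<noteq> 0" by blast
  have x0: "xr r0 \<noteq> 0\<^sub>v ?n"
  proof
    assume "xr r0 = 0\<^sub>v ?n"
    hence "xr r0 \<bullet> xr r0 = 0" by simp
    thus False using r0(2) by simp
  qed
  have y0: "yr r1 \<noteq> 0\<^sub>v ?n"
  proof
    assume "yr r1 = 0\<^sub>v ?n"
    hence "yr r1 \<bullet> yr r1 = 0" by simp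
    thus False using r1(2) by simp
  qed
  have l2pos: "0 \<le> l2"
  proof -
    have "0 \<le> xr r0 \<bullet> (?L *\<^sub>v xr r0)" by (rule Lw_psd[OF Eb xrc wnn])
    also have "\<dots> = l2 * (xr r0 \<bullet> xr r0)" using br[OF r0(1)] unfolding b_def by simp
    finally show ?thesis using r0(2) sp_self_nonneg[of "xr r0"]
      by (simp add: zero_le_mult_iff)
  qed
  have lam2: "lambda2 ?L = l2"
    unfolding lambda2_def
  proof (rule l2_ident[OF L Lsym n2 _ _ xrc x0 sxr[OF r0(1)] _ l2pos])
    show "l2 * (y \<bullet> y) \<le> y \<bullet> (?L *\<^sub>v y)" if y: "y \<in> carrier_vec ?n" and sy: "(\<Sum>k<?n. y $ k) = 0" for y
      using ge[OF y] sy by simp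
    show "\<And>y a. y \<in> carrier_vec ?n \<Longrightarrow>
        (y + a \<cdot>\<^sub>v vec ?n (\<lambda>_. 1)) \<bullet> (?L *\<^sub>v (y + a \<cdot>\<^sub>v vec ?n (\<lambda>_. 1))) = y \<bullet> (?L *\<^sub>v y)"
      by (rule Lw_inv[OF Eb])
    show "xr r0 \<bullet> (?L *\<^sub>v xr r0) = l2 * (xr r0 \<bullet> xr r0)" using br[OF r0(1)] unfolding b_def by simp
  qed
  have lamm: "lambda_max ?L = lmax"
    unfolding lambda_max_def
  proof -
    have "sorted_eigs ?L ! (?n - 1) = lmax"
      by (rule lmax_ident[OF L Lsym _ le yrc y0]) (use N ar[OF r1(1)] in \<open>auto simp: a_def\<close>)
    moreover have "dim_row ?L = ?n" by (simp add: Lw_def)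
    ultimately show "sorted_eigs ?L ! (dim_row ?L - 1) = lmax" by simp
  qed
  show ?thesis
  proof
    fix p :: "real vec" assume p: "p \<in> carrier_vec ?n"
    have 1: "?L *\<^sub>v vec ?n (\<lambda>k. p \<bullet> u k) = l2 \<cdot>\<^sub>v vec ?n (\<lambda>k. p \<bullet> u k)"
      by (rule eig_comb[OF L uc evx[unfolded xr_def] p])
    have 2: "?L *\<^sub>v vec ?n (\<lambda>k. p \<bullet> v k) = lmax \<cdot>\<^sub>v vec ?n (\<lambda>k. p \<bullet> v k)"
      by (rule eig_comb[OF L vc evy[unfolded yr_def] p])
    show "vec ?n (\<lambda>i. p \<bullet> u i) \<in> eigenspace ?L (lambda2 ?L) \<and>
          vec ?n (\<lambda>i. p \<bullet> v i) \<in> eigenspace ?L (lambda_max ?L)"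
      unfolding eigenspace_def lam2 lamm using 1 2 by (simp add: Lw_def)
  qed
qed

end
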